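(* Under the hypotheses and notation below, $$L(z;t):=\sum_{k>0}L_k(t)z^k=\frac{z}{(1-z)\sqrt{D(t)}}\sum_{k\ge0}S_{k,0}(t)^2z^k.$$
   Context: $\mathcal H=\{(k,0):k\le0\}$; $A\subset\mathbb{Z}^2$ finite, symmetric ($(i,j)\in A\Rightarrow(i,-j)\in A$), with small height variations ($|j|\le1$), $A_1\ne0$, and reversal-symmetric ($(i,j)\in A\Rightarrow(-i,-j)\in A$). For $k>0$, a loop at $(k,0)$ is a walk $(w_0,\dots,w_n)$, $n\ge0$, with steps in $A$, $w_0=w_n=(k,0)$ and $w_m\notin\mathcal H$ for all $m$; $L_k(t)$ is the length generating function of loops at $(k,0)$ (including the empty loop). $S_{k,0}(t)$ is the length generating function of walks with steps in $A$ from $(0,0)$ to $(k,0)$ with $w_m\notin\mathcal H$ for $1\le m\le n$. With $A_0(x)=\sum_{(i,0)\in A}x^i$, $A_1(x)=\sum_{(i,1)\in A}x^i$, $\delta(x)=(1-tA_0(x))^2-4t^2A_1(x)^2$, $D(t)$ is the constant factor of the canonical factorization $\delta=D\Delta(x)\bar\Delta(1/x)$ (unique triple of power series in $t$: $D$ real coefficients, $\Delta$ coefficients in $\mathbb{R}[x]$, $\bar\Delta$ in $\mathbb{R}[1/x]$, $D(0)=\Delta(0;t)=\bar\Delta(0;t)=\Delta(x;0)=\bar\Delta(1/x;0)=1$); $\sqrt D$ has constant term $1$. *)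

theory Defs
  imports "HOL-Computational_Algebra.Computational_Algebra"
begin

definition inH :: "int \<times> int \<Rightarrow> bool" where
  "inH p \<longleftrightarrow> snd p = 0 \<and> fst p \<le> 0"

definition is_walk :: "(int \<times> int) set \<Rightarrow> (int \<times> int) list \<Rightarrow> bool" where
  "is_walk A ws \<longleftrightarrow> ws \<noteq> [] \<and>
     (\<forall>m. Suc m < length ws \<longrightarrow>
        (fst (ws ! Suc m) - fst (ws ! m), snd (ws ! Suc m) - snd (ws ! m)) \<in> A)"

definition loops :: "(int \<times> int) set \<Rightarrow> int \<Rightarrow> nat \<Rightarrow> (int \<times> int) list set" where
  "loops A k n = {ws. is_walk A ws \<and> length ws = Suc n \<and> ws ! 0 = (k, 0) \<and>
      ws ! n = (k, 0) \<and> (\<forall>m\<le>n. \<not> inH (ws ! m))}"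

definition swalks :: "(int \<times> int) set \<Rightarrow> int \<Rightarrow> nat \<Rightarrow> (int \<times> int) list set" where
  "swalks A k n = {ws. is_walk A ws \<and> length ws = Suc n \<and> ws ! 0 = (0, 0) \<and>
      ws ! n = (k, 0) \<and> (\<forall>m. 1 \<le> m \<and> m \<le> n \<longrightarrow> \<not> inH (ws ! m))}"

definition Lgf :: "(int \<times> int) set \<Rightarrow> int \<Rightarrow> real fps" where
  "Lgf A k = Abs_fps (\<lambda>n. real (card (loops A k n)))"

definition Sgf :: "(int \<times> int) set \<Rightarrow> int \<Rightarrow> real fps" where
  "Sgf A k = Abs_fps (\<lambda>n. real (card (swalks A k n)))"

text \<open>Laurent polynomials in x are represented as (finitely supported) formal
  Laurent series real fls. A_0(x) and A_1(x):\<close>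
definition Apoly :: "(int \<times> int) set \<Rightarrow> int \<Rightarrow> real fls" where
  "Apoly A j = (\<Sum>p\<in>{p\<in>A. snd p = j}. fls_X_intpow (fst p))"

definition delta :: "(int \<times> int) set \<Rightarrow> real fls fps" where
  "delta A = (1 - fps_X * fps_const (Apoly A 0))\<^sup>2
             - 4 * fps_X\<^sup>2 * fps_const ((Apoly A 1)\<^sup>2)"

definition poly_x :: "real poly \<Rightarrow> real fls" where
  "poly_x p = (\<Sum>i\<le>degree p. fls_const (coeff p i) * fls_X_intpow (int i))"

definition poly_xinv :: "real poly \<Rightarrow> real fls" where
  "poly_xinv p = (\<Sum>i\<le>degree p. fls_const (coeff p i) * fls_X_intpow (- int i))"

text \<open>Canonical factorization delta = D * Delta(x) * Delta-bar(1/x):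
  D a real power series in t, Delta (resp. Delta-bar) a power series in t whose
  coefficients are polynomials in x (resp. in 1/x), normalized by
  D(0) = Delta(0;t) = Delta-bar(0;t) = Delta(x;0) = Delta-bar(1/x;0) = 1.\<close>
definition canonical_factorization ::
    "(int \<times> int) set \<Rightarrow> real fps \<Rightarrow> real poly fps \<Rightarrow> real poly fps \<Rightarrow> bool" where
  "canonical_factorization A D Dl Dlb \<longleftrightarrow>
     fps_nth D 0 = 1 \<and>
     (\<forall>n. poly (fps_nth Dl n) 0 = (if n = 0 then 1 else 0)) \<and>
     (\<forall>n. poly (fps_nth Dlb n) 0 = (if n = 0 then 1 else 0)) \<and>
     fps_nth Dl 0 = 1 \<and> fps_nth Dlb 0 = 1 \<and>
     delta A = Abs_fps (\<lambda>n. fls_const (fps_nth D n))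
               * Abs_fps (\<lambda>n. poly_x (fps_nth Dl n))
               * Abs_fps (\<lambda>n. poly_xinv (fps_nth Dlb n))"

definition Dconst :: "(int \<times> int) set \<Rightarrow> real fps" where
  "Dconst A = (THE D. \<exists>Dl Dlb. canonical_factorization A D Dl Dlb)"

definition fps_sqrt1 :: "real fps \<Rightarrow> real fps" where
  "fps_sqrt1 F = (THE s. fps_nth s 0 = 1 \<and> s\<^sup>2 = F)"

end

theory Submission
  imports Defs "HOL-Library.Product_Plus"
begin

unbundle Formal_Laurent_Series.fps_syntax


fun cntF :: "(int \<times> int) set \<Rightarrow> (int \<times> int \<Rightarrow> bool) \<Rightarrow> nat \<Rightarrow> int \<times> int \<Rightarrow> int \<times> int \<Rightarrow> nat" where
  "cntF A F 0 p q = (if p = q then 1 else 0)"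
| "cntF A F (Suc n) p q = (\<Sum>s\<in>A. if F (p + s) then 0 else cntF A F n (p + s) q)"

declare cntF.simps(2)[simp del]
lemmas cntF_Suc = cntF.simps(2)

definition cI :: "(int \<times> int) set \<Rightarrow> (int \<times> int \<Rightarrow> bool) \<Rightarrow> nat \<Rightarrow> int \<times> int \<Rightarrow> int \<times> int \<Rightarrow> nat" where
  "cI A F n p q = (case n of 0 \<Rightarrow> (if p = q then 1 else 0) | Suc m \<Rightarrow> (\<Sum>s\<in>A. cntF A F m p (q - s)))"

lemma cI_0 [simp]: "cI A F 0 p q = (if p = q then 1 else 0)"
  by (simp add: cI_def)

lemma cI_Suc: "cI A F (Suc m) p q = (\<Sum>s\<in>A. cntF A F m p (q - s))"
  by (simp add: cI_def)

lemma sum_if_zero_distrib: "(if c then 0 else (\<Sum>x\<in>S. f x)) = (\<Sum>x\<in>S. if c then 0 else f x)"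
  by simp

lemma cntF_LS:
  "cntF A F (Suc n) p q = (if F q then 0 else (\<Sum>s\<in>A. cntF A F n p (q - s)))"
proof (induction n arbitrary: p)
  case 0
  show ?case
  proof (cases "F q")
    case True
    then show ?thesis by (auto intro!: sum.neutral simp: cntF_Suc)
  next
    case False
    then show ?thesis by (auto intro!: sum.cong simp: eq_diff_eq cntF_Suc)
  qed
next
  case (Suc n)
  have "cntF A F (Suc (Suc n)) p q = (\<Sum>s\<in>A. if F (p + s) then 0 else cntF A F (Suc n) (p + s) q)"
    by (rule cntF_Suc)
  also have "\<dots> = (\<Sum>s\<in>A. if F (p + s) then 0 else (if F q then 0 else (\<Sum>s'\<in>A. cntF A F n (p + s) (q - s'))))"
    by (simp only: Suc.IH)
  also have "\<dots> = (if F q then 0 else (\<Sum>s'\<in>A. cntF A F (Suc n) p (q - s')))"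
  proof (cases "F q")
    case True then show ?thesis by (auto intro!: sum.neutral)
  next
    case False
    have "(\<Sum>s\<in>A. if F (p + s) then 0 else (\<Sum>s'\<in>A. cntF A F n (p + s) (q - s')))
        = (\<Sum>s\<in>A. \<Sum>s'\<in>A. if F (p + s) then 0 else cntF A F n (p + s) (q - s'))"
      by (simp only: sum_if_zero_distrib)
    also have "\<dots> = (\<Sum>s'\<in>A. \<Sum>s\<in>A. if F (p + s) then 0 else cntF A F n (p + s) (q - s'))"
      by (rule sum.swap)
    finally show ?thesis using False by (simp add: cntF_Suc cong: if_cong)
  qed
  finally show ?case .
qed

lemma cntF_cI: "cntF A F (Suc n) p q = (if F q then 0 else cI A F (Suc n) p q)"
  by (subst cntF_LS) (simp add: cI_Suc)

lemma cI_step: "cI A F (Suc (Suc n)) p q = (\<Sum>s\<in>A. if F (p + s) then 0 else cI A F (Suc n) (p + s) q)"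
proof -
  have "cI A F (Suc (Suc n)) p q = (\<Sum>s'\<in>A. \<Sum>s\<in>A. if F (p + s) then 0 else cntF A F n (p + s) (q - s'))"
    by (simp add: cI_Suc cntF_Suc sum_if_zero_distrib)
  also have "\<dots> = (\<Sum>s\<in>A. \<Sum>s'\<in>A. if F (p + s) then 0 else cntF A F n (p + s) (q - s'))"
    by (rule sum.swap)
  also have "\<dots> = (\<Sum>s\<in>A. if F (p + s) then 0 else cI A F (Suc n) (p + s) q)"
    by (simp only: sum_if_zero_distrib cI_Suc)
  finally show ?thesis .
qed

lemma sum_neg_reindex:
  assumes "\<And>s. s \<in> A \<Longrightarrow> - s \<in> A"
  shows "(\<Sum>s\<in>A. f s) = (\<Sum>s\<in>A. f (- (s::int\<times>int)))"
  by (rule sum.reindex_bij_witness[where i = uminus and j = uminus]) (auto simp: assms)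

lemma cI_rev:
  assumes neg: "\<And>s. s \<in> A \<Longrightarrow> - s \<in> A"
  shows "cI A F n p q = cI A F n q p"
proof (induction n arbitrary: p q)
  case 0
  then show ?case by auto
next
  case (Suc n)
  show ?case
  proof (cases n)
    case 0
    have "cI A F (Suc n) p q = (\<Sum>s\<in>A. if p = q - s then 1 else 0)"
      by (simp add: cI_Suc 0)
    also have "\<dots> = (\<Sum>s\<in>A. if p = q - (- s) then 1 else 0)"
      by (rule sum_neg_reindex[OF neg])
    also have "\<dots> = (\<Sum>s\<in>A. if q = p - s then 1 else 0)"
      by (intro sum.cong refl) (auto simp: algebra_simps)
    also have "\<dots> = cI A F (Suc n) q p"
      by (simp add: cI_Suc 0)
    finally show ?thesis .
  next
    case (Suc m)
    have "cI A F (Suc n) p q = (\<Sum>s\<in>A. if F (p + s) then 0 else cI A F (Suc m) (p + s) q)"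
      by (simp add: Suc cI_step)
    also have "\<dots> = (\<Sum>s\<in>A. if F (p + s) then 0 else cI A F (Suc m) q (p + s))"
      using Suc.IH Suc by (intro sum.cong refl) simp
    also have "\<dots> = (\<Sum>s\<in>A. if F (p + s) then 0 else (\<Sum>s'\<in>A. cntF A F m q (p + s - s')))"
      by (simp only: cI_Suc)
    also have "\<dots> = (\<Sum>s\<in>A. if F (p + - s) then 0 else (\<Sum>s'\<in>A. cntF A F m q (p + - s - s')))"
      by (rule sum_neg_reindex[OF neg])
    also have "\<dots> = (\<Sum>s\<in>A. if F (p - s) then 0 else (\<Sum>s'\<in>A. cntF A F m q (p - s - s')))"
      by (simp cong: if_cong)
    also have "\<dots> = (\<Sum>s\<in>A. cntF A F (Suc m) q (p - s))"
      by (simp add: cntF_LS)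
    also have "\<dots> = cI A F (Suc n) q p"
      by (simp add: cI_Suc Suc)
    finally show ?thesis .
  qed
qed

lemma cntF_transl:
  "cntF A F n p q = cntF A (\<lambda>r. F (r + d)) n (p - d) (q - d)"
proof (induction n arbitrary: p)
  case 0
  then show ?case by simp
next
  case (Suc n)
  have e: "\<And>s. p - d + s = p + s - d" by (simp add: algebra_simps)
  have "cntF A F (Suc n) p q = (\<Sum>s\<in>A. if F (p + s) then 0 else cntF A (\<lambda>r. F (r + d)) n (p + s - d) (q - d))"
    by (simp only: cntF_Suc Suc.IH)
  also have "\<dots> = cntF A (\<lambda>r. F (r + d)) (Suc n) (p - d) (q - d)"
    by (simp only: cntF_Suc e diff_add_cancel)
  finally show ?case .
qed

lemma cI_transl:
  "cI A F n p q = cI A (\<lambda>r. F (r + d)) n (p - d) (q - d)"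
  by (cases n) (simp_all add: cI_Suc cntF_transl[of A F _ p _ d] algebra_simps)

lemma first_visit:
  assumes Fv: "\<not> F v"
  shows "cntF A F n p q = cntF A (F(v:=True)) n p q
          + (\<Sum>m=1..n. cI A (F(v:=True)) m p v * cntF A F (n - m) v q)"
proof (induction n arbitrary: p)
  case 0
  then show ?case by simp
next
  case (Suc n)
  define G where "G = F(v:=True)"
  have Gv: "G v" by (simp add: G_def)
  have GF: "r \<noteq> v \<Longrightarrow> G r = F r" for r by (simp add: G_def)
  have hterm: "(if F (p + s) then 0 else cntF A F n (p + s) q)
      = (if p + s = v then cntF A F n v q else 0)
        + (if G (p + s) then 0 else cntF A G n (p + s) q)
        + (if G (p + s) then 0 else (\<Sum>m=1..n. cI A G m (p + s) v * cntF A F (n - m) v q))" for s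
  proof (cases "p + s = v")
    case True
    then show ?thesis using Fv Gv by simp
  next
    case False
    then show ?thesis using Suc.IH[of "p + s"] GF[OF False] by (simp add: G_def del: fun_upd_apply)
  qed
  have "cntF A F (Suc n) p q = (\<Sum>s\<in>A. if F (p + s) then 0 else cntF A F n (p + s) q)"
    by (rule cntF_Suc)
  also have "\<dots> = (\<Sum>s\<in>A. if p + s = v then cntF A F n v q else 0)
        + (\<Sum>s\<in>A. if G (p + s) then 0 else cntF A G n (p + s) q)
        + (\<Sum>s\<in>A. if G (p + s) then 0 else (\<Sum>m=1..n. cI A G m (p + s) v * cntF A F (n - m) v q))"
    by (simp only: hterm sum.distrib)
  also have "(\<Sum>s\<in>A. if G (p + s) then 0 else cntF A G n (p + s) q) = cntF A G (Suc n) p q"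
    by (simp add: cntF_Suc)
  also have "(\<Sum>s\<in>A. if p + s = v then cntF A F n v q else 0) = cI A G 1 p v * cntF A F (Suc n - 1) v q"
    by (simp add: cI_Suc sum_distrib_right, intro sum.cong refl, auto simp: eq_diff_eq)
  also have "(\<Sum>s\<in>A. if G (p + s) then 0 else (\<Sum>m=1..n. cI A G m (p + s) v * cntF A F (n - m) v q))
      = (\<Sum>m=1..n. \<Sum>s\<in>A. (if G (p + s) then 0 else cI A G m (p + s) v) * cntF A F (n - m) v q)"
    by (subst sum.swap) (auto intro!: sum.cong)
  also have "\<dots> = (\<Sum>m=1..n. cI A G (Suc m) p v * cntF A F (Suc n - Suc m) v q)"
  proof (intro sum.cong refl)
    fix m assume "m \<in> {1..n}"
    then obtain m' where m': "m = Suc m'" by (cases m) auto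
    show "(\<Sum>s\<in>A. (if G (p + s) then 0 else cI A G m (p + s) v) * cntF A F (n - m) v q)
        = cI A G (Suc m) p v * cntF A F (Suc n - Suc m) v q"
      by (simp add: m' cI_step sum_distrib_right cong: if_cong)
  qed
  also have "\<dots> = (\<Sum>m=2..Suc n. cI A G m p v * cntF A F (Suc n - m) v q)"
    by (simp only: numeral_2_eq_2 One_nat_def sum.shift_bounds_cl_Suc_ivl)
  finally have "cntF A F (Suc n) p q = cntF A G (Suc n) p q + (cI A G 1 p v * cntF A F (Suc n - 1) v q
      + (\<Sum>m=2..Suc n. cI A G m p v * cntF A F (Suc n - m) v q))"
    by simp
  also have "cI A G 1 p v * cntF A F (Suc n - 1) v q
      + (\<Sum>m=2..Suc n. cI A G m p v * cntF A F (Suc n - m) v q)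
      = (\<Sum>m=1..Suc n. cI A G m p v * cntF A F (Suc n - m) v q)"
    by (subst sum.atLeast_Suc_atMost[of 1]) (simp_all add: numeral_2_eq_2)
  finally show ?case by (simp only: G_def)
qed


lemma is_walk_single [simp]: "is_walk A [a]"
  by (simp add: is_walk_def)

lemma is_walk_Cons:
  assumes "ws \<noteq> []"
  shows "is_walk A (a # ws) \<longleftrightarrow> (ws ! 0 - a \<in> A \<and> is_walk A ws)"
proof
  assume h: "is_walk A (a # ws)"
  have "ws ! 0 - a \<in> A"
    using h assms unfolding is_walk_def by (auto elim!: allE[of _ 0] simp: minus_prod_def)
  moreover have "is_walk A ws"
    using h assms unfolding is_walk_def
    by (metis Suc_less_eq length_Cons nth_Cons_Suc)
  ultimately show "ws ! 0 - a \<in> A \<and> is_walk A ws" by blast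
next
  assume h: "ws ! 0 - a \<in> A \<and> is_walk A ws"
  show "is_walk A (a # ws)"
    unfolding is_walk_def
  proof (intro conjI allI impI)
    fix m assume m: "Suc m < length (a # ws)"
    show "(fst ((a # ws) ! Suc m) - fst ((a # ws) ! m), snd ((a # ws) ! Suc m) - snd ((a # ws) ! m)) \<in> A"
    proof (cases m)
      case 0
      then show ?thesis using h by (simp add: prod_eq_iff minus_prod_def)
    next
      case (Suc m')
      then show ?thesis using h m unfolding is_walk_def by simp
    qed
  qed simp
qed

definition WS :: "(int \<times> int) set \<Rightarrow> (int \<times> int \<Rightarrow> bool) \<Rightarrow> nat \<Rightarrow> int \<times> int \<Rightarrow> int \<times> int \<Rightarrow> (int \<times> int) list set" where
  "WS A F n p q = {ws. is_walk A ws \<and> length ws = Suc n \<and> ws ! 0 = p \<and> ws ! n = q \<and>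
      (\<forall>m. 1 \<le> m \<and> m \<le> n \<longrightarrow> \<not> F (ws ! m))}"

lemma WS_0: "WS A F 0 p q = (if p = q then {[p]} else {})"
  unfolding WS_def by (auto simp: length_Suc_conv)

lemma WS_Suc: "WS A F (Suc n) p q = (\<Union>s\<in>{s\<in>A. \<not> F (p + s)}. (Cons p) ` WS A F n (p + s) q)"
proof (intro equalityI subsetI)
  fix ws assume "ws \<in> WS A F (Suc n) p q"
  hence h: "is_walk A ws" "length ws = Suc (Suc n)" "ws ! 0 = p" "ws ! Suc n = q"
      "\<And>m. 1 \<le> m \<Longrightarrow> m \<le> Suc n \<Longrightarrow> \<not> F (ws ! m)"
    unfolding WS_def by auto
  obtain a ws' where ws: "ws = a # ws'" using h(2) by (cases ws) auto
  have a: "a = p" using h(3) ws by simp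
  have ne: "ws' \<noteq> []" using h(2) ws by auto
  define s where "s = ws' ! 0 - p"
  have w: "s \<in> A" "is_walk A ws'" using h(1) ws a ne is_walk_Cons[OF ne] s_def by auto
  have nf: "\<not> F (p + s)" using h(5)[of 1] ws s_def by simp
  have nf': "\<not> F (ws' ! m)" if "1 \<le> m" "m \<le> n" for m
    using h(5)[of "Suc m"] ws that by simp
  have "ws' \<in> WS A F n (p + s) q"
    unfolding WS_def using w h ws s_def nf' by auto
  then show "ws \<in> (\<Union>s\<in>{s\<in>A. \<not> F (p + s)}. (Cons p) ` WS A F n (p + s) q)"
    using ws a w nf by blast
next
  fix ws assume "ws \<in> (\<Union>s\<in>{s\<in>A. \<not> F (p + s)}. (Cons p) ` WS A F n (p + s) q)"
  then obtain s ws' where s: "s \<in> A" "\<not> F (p + s)" and ws: "ws = p # ws'" and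
      w': "ws' \<in> WS A F n (p + s) q" by blast
  have h: "is_walk A ws'" "length ws' = Suc n" "ws' ! 0 = p + s" "ws' ! n = q"
      "\<And>m. 1 \<le> m \<Longrightarrow> m \<le> n \<Longrightarrow> \<not> F (ws' ! m)"
    using w' unfolding WS_def by auto
  have ne: "ws' \<noteq> []" using h(2) by auto
  have "is_walk A ws" using ws is_walk_Cons[OF ne] h s by simp
  moreover have "\<not> F (ws ! m)" if m1: "1 \<le> m" "m \<le> Suc n" for m
  proof -
    obtain m' where m': "m = Suc m'" using m1 by (cases m) auto
    show ?thesis
    proof (cases m')
      case 0 then show ?thesis using m' ws h s by simp
    next
      case (Suc k) then show ?thesis using m' ws h(5)[of m'] m1 by simp
    qed
  qed
  ultimately show "ws \<in> WS A F (Suc n) p q"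
    unfolding WS_def using ws h by auto
qed

lemma WS_card:
  assumes "finite A"
  shows "finite (WS A F n p q) \<and> card (WS A F n p q) = cntF A F n p q"
proof (induction n arbitrary: p)
  case 0
  then show ?case by (simp add: WS_0)
next
  case (Suc n)
  have fin: "finite {s\<in>A. \<not> F (p + s)}" using assms by simp
  have disj: "\<forall>s\<in>{s\<in>A. \<not> F (p + s)}. \<forall>s'\<in>{s\<in>A. \<not> F (p + s)}. s \<noteq> s' \<longrightarrow>
      (Cons p) ` WS A F n (p + s) q \<inter> (Cons p) ` WS A F n (p + s') q = {}"
    by (auto simp: WS_def)
  have fin2: "finite (WS A F (Suc n) p q)"
    unfolding WS_Suc using fin Suc by auto
  have "card (WS A F (Suc n) p q) = (\<Sum>s\<in>{s\<in>A. \<not> F (p + s)}. card ((Cons p) ` WS A F n (p + s) q))"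
    unfolding WS_Suc using fin Suc disj by (intro card_UN_disjoint) auto
  also have "\<dots> = (\<Sum>s\<in>{s\<in>A. \<not> F (p + s)}. cntF A F n (p + s) q)"
    using Suc by (intro sum.cong refl) (simp add: card_image)
  also have "\<dots> = cntF A F (Suc n) p q"
    using assms by (simp add: cntF_Suc sum.inter_filter) (intro sum.cong refl, simp)
  finally show ?case using fin2 by simp
qed


lemma cntF_bound:
  assumes b: "\<And>s. s \<in> A \<Longrightarrow> \<bar>fst s\<bar> \<le> b"
  shows "cntF A F n p q \<noteq> 0 \<Longrightarrow> \<bar>fst q - fst p\<bar> \<le> int n * b"
proof (induction n arbitrary: p)
  case 0
  then show ?case by (simp split: if_splits)
next
  case (Suc n)
  from Suc.prems have "(\<Sum>s\<in>A. if F (p + s) then 0 else cntF A F n (p + s) q) \<noteq> 0"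
    by (simp add: cntF_Suc)
  then obtain s where "s \<in> A" "(if F (p + s) then 0 else cntF A F n (p + s) q) \<noteq> 0"
    by (rule sum.not_neutral_contains_not_neutral)
  then have s: "s \<in> A" "\<not> F (p + s)" "cntF A F n (p + s) q \<noteq> 0"
    by (auto split: if_splits)
  have h1: "\<bar>fst q - fst (p + s)\<bar> \<le> int n * b" by (rule Suc.IH[OF s(3)])
  have h2: "\<bar>fst s\<bar> \<le> b" by (rule b[OF s(1)])
  have t: "\<bar>x - y\<bar> \<le> \<bar>x - (y + z)\<bar> + \<bar>z\<bar>" for x y z :: int by arith
  have e1: "int (Suc n) * b = int n * b + b" by (simp add: algebra_simps)
  show ?case unfolding e1 using h1 h2 t[of "fst q" "fst p" "fst s"] by simp
qed

lemma cI_bound: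
  assumes b: "\<And>s. s \<in> A \<Longrightarrow> \<bar>fst s\<bar> \<le> b"
  shows "cI A F n p q \<noteq> 0 \<Longrightarrow> \<bar>fst q - fst p\<bar> \<le> int n * b"
proof (cases n)
  case 0
  then show "cI A F n p q \<noteq> 0 \<Longrightarrow> \<bar>fst q - fst p\<bar> \<le> int n * b" by (simp split: if_splits)
next
  case (Suc m)
  assume "cI A F n p q \<noteq> 0"
  then have "(\<Sum>s\<in>A. cntF A F m p (q - s)) \<noteq> 0" by (simp add: cI_Suc Suc)
  then obtain s where s: "s \<in> A" "cntF A F m p (q - s) \<noteq> 0"
    by (rule sum.not_neutral_contains_not_neutral)
  have h1: "\<bar>fst (q - s) - fst p\<bar> \<le> int m * b" by (rule cntF_bound[OF b s(2)])
  have h2: "\<bar>fst s\<bar> \<le> b" by (rule b[OF s(1)])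
  have t: "\<bar>x - y\<bar> \<le> \<bar>(x - z) - y\<bar> + \<bar>z\<bar>" for x y z :: int by arith
  have e1: "int (Suc m) * b = int m * b + b" by (simp add: algebra_simps)
  show ?thesis unfolding Suc e1 using h1 h2 t[of "fst q" "fst p" "fst s"] by simp
qed

lemma cntF_local:
  assumes b: "\<And>s. s \<in> A \<Longrightarrow> \<bar>fst s\<bar> \<le> b" and b0: "0 \<le> b"
  shows "(\<And>r. \<bar>fst r - fst p\<bar> \<le> int n * b \<Longrightarrow> F r = F' r) \<Longrightarrow> cntF A F n p q = cntF A F' n p q"
proof (induction n arbitrary: p)
  case 0
  then show ?case by simp
next
  case (Suc n)
  have "(if F (p + s) then 0 else cntF A F n (p + s) q) = (if F' (p + s) then 0 else cntF A F' n (p + s) q)"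
    if s: "s \<in> A" for s
  proof -
    have bs: "\<bar>fst s\<bar> \<le> b" using b s by blast
    have bn: "0 \<le> int n * b" using b0 by simp
    have e1: "int (Suc n) * b = b + int n * b" by (simp add: algebra_simps)
    have "\<bar>fst (p + s) - fst p\<bar> \<le> int (Suc n) * b"
      unfolding e1 fst_add using bs bn by linarith
    hence "F (p + s) = F' (p + s)" by (rule Suc.prems)
    moreover have "cntF A F n (p + s) q = cntF A F' n (p + s) q"
    proof (rule Suc.IH)
      fix r :: "int \<times> int" assume r: "\<bar>fst r - fst (p + s)\<bar> \<le> int n * b"
      have "\<bar>fst r - fst p\<bar> \<le> int (Suc n) * b"
      proof -
        have t: "\<bar>x - y\<bar> \<le> \<bar>x - (y + z)\<bar> + \<bar>z\<bar>" for x y z :: int by arith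
        show ?thesis unfolding e1 using r bs bn t[of "fst r" "fst p" "fst s"] by simp
      qed
      thus "F r = F' r" by (rule Suc.prems)
    qed
    ultimately show ?thesis by simp
  qed
  then show ?case by (simp add: cntF_Suc)
qed


definition Fj :: "int \<Rightarrow> int \<times> int \<Rightarrow> bool" where
  "Fj j r \<longleftrightarrow> snd r = 0 \<and> fst r < j"

lemma inH_Fj: "inH = Fj 1"
  by (auto simp: fun_eq_iff inH_def Fj_def)

lemma Fj_upd: "(Fj j)((j, 0) := True) = Fj (j + 1)"
  by (auto simp: fun_eq_iff Fj_def)

lemma Fj_shift: "(\<lambda>r. Fj j (r + (d, 0))) = Fj (j - d)"
  by (auto simp: fun_eq_iff Fj_def)

definition bnd :: "(int \<times> int) set \<Rightarrow> int" where
  "bnd A = Max (insert 0 ((\<lambda>s. \<bar>fst s\<bar>) ` A))"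

lemma bnd_ge: "finite A \<Longrightarrow> s \<in> A \<Longrightarrow> \<bar>fst s\<bar> \<le> bnd A"
  unfolding bnd_def by (rule Max_ge) auto

lemma bnd_nonneg: "finite A \<Longrightarrow> 0 \<le> bnd A"
  unfolding bnd_def by (rule Max_ge) auto

definition Sn :: "(int \<times> int) set \<Rightarrow> int \<Rightarrow> nat \<Rightarrow> nat" where
  "Sn A i n = cntF A (Fj 1) n 0 (i, 0)"
definition Pn :: "(int \<times> int) set \<Rightarrow> int \<Rightarrow> nat \<Rightarrow> nat" where
  "Pn A k n = cntF A (Fj 0) n 0 (k, 0)"
definition Ln :: "(int \<times> int) set \<Rightarrow> int \<Rightarrow> nat \<Rightarrow> nat" where
  "Ln A k n = cntF A (Fj 1) n (k, 0) (k, 0)"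
definition Wn :: "(int \<times> int) set \<Rightarrow> int \<Rightarrow> int \<Rightarrow> nat \<Rightarrow> nat" where
  "Wn A k y n = cntF A (\<lambda>_. False) n 0 (k, y)"

lemma Sn_0: "Sn A 0 n = (if n = 0 then 1 else 0)"
  by (cases n) (simp_all add: Sn_def cntF_cI Fj_def zero_prod_def)

lemma Sn_at0: "i \<noteq> 0 \<Longrightarrow> Sn A i 0 = 0"
  by (simp add: Sn_def zero_prod_def)

lemma Pn_neg: "k < 0 \<Longrightarrow> Pn A k n = 0"
  by (cases n) (simp_all add: Pn_def cntF_cI Fj_def zero_prod_def)

lemma cntF_eq_cI: "\<not> F q \<Longrightarrow> 0 < n \<Longrightarrow> cntF A F n p q = cI A F n p q"
  by (cases n) (simp_all add: cntF_cI)

locale wset =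
  fixes A :: "(int \<times> int) set"
  assumes fin: "finite A" and neg: "\<And>s. s \<in> A \<Longrightarrow> - s \<in> A"
begin

lemma cI_Sn:
  assumes "0 < i"
  shows "cI A (Fj 1) m (i, 0) 0 = Sn A i m"
proof (cases m)
  case 0
  then show ?thesis using assms by (simp add: Sn_def zero_prod_def)
next
  case (Suc m')
  have "cI A (Fj 1) m (i, 0) 0 = cI A (Fj 1) m 0 (i, 0)" by (rule cI_rev[OF neg])
  also have "\<dots> = Sn A i m" unfolding Sn_def using assms Suc
    by (subst cntF_eq_cI) (auto simp: Fj_def)
  finally show ?thesis .
qed

lemma first_visit_0:
  "cntF A (Fj 0) n p q = cntF A (Fj 1) n p q
     + (\<Sum>m=1..n. cI A (Fj 1) m p 0 * cntF A (Fj 0) (n - m) 0 q)"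
  using first_visit[of "Fj 0" "(0,0)" A n p q] Fj_upd[of 0]
  by (simp add: Fj_def zero_prod_def)

lemma Pn_conv:
  assumes k: "0 < k"
  shows "Pn A k r = (\<Sum>m=0..r. Sn A k m * Pn A 0 (r - m))"
proof (cases r)
  case 0
  then show ?thesis using k by (simp add: Pn_def Sn_def zero_prod_def)
next
  case (Suc r')
  have "Pn A k r = cI A (Fj 0) r 0 (k, 0)"
    unfolding Pn_def using k Suc by (subst cntF_eq_cI) (auto simp: Fj_def)
  also have "\<dots> = cI A (Fj 0) r (k, 0) 0" by (rule cI_rev[OF neg])
  also have "\<dots> = cntF A (Fj 0) r (k, 0) 0"
    using Suc by (subst cntF_eq_cI) (auto simp: Fj_def zero_prod_def)
  also have "\<dots> = cntF A (Fj 1) r (k, 0) 0 + (\<Sum>m=1..r. cI A (Fj 1) m (k, 0) 0 * cntF A (Fj 0) (r - m) 0 0)"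
    by (rule first_visit_0)
  also have "cntF A (Fj 1) r (k, 0) 0 = 0"
    using Suc by (simp add: cntF_cI Fj_def zero_prod_def)
  also have "(\<Sum>m=1..r. cI A (Fj 1) m (k, 0) 0 * cntF A (Fj 0) (r - m) 0 0)
      = (\<Sum>m=1..r. Sn A k m * Pn A 0 (r - m))"
    using k by (intro sum.cong refl) (simp add: cI_Sn Pn_def flip: zero_prod_def)
  also have "\<dots> = (\<Sum>m=0..r. Sn A k m * Pn A 0 (r - m))"
    using k by (simp add: sum.atLeast_Suc_atMost[of 0 r] Sn_at0 atLeastSucAtMost_greaterThanAtMost
        flip: One_nat_def)
  finally show ?thesis by simp
qed

lemma Ln_step:
  assumes k: "0 < k"
  shows "Ln A (k + 1) n = Ln A k n + (\<Sum>m=0..n. Sn A k m * Pn A k (n - m))"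
proof -
  have "Ln A (k + 1) n = cntF A (Fj 0) n (k, 0) (k, 0)"
    unfolding Ln_def by (subst cntF_transl[where d = "(1, 0)"]) (simp add: Fj_shift)
  also have "\<dots> = Ln A k n + (\<Sum>m=1..n. cI A (Fj 1) m (k, 0) 0 * cntF A (Fj 0) (n - m) 0 (k, 0))"
    unfolding Ln_def by (rule first_visit_0)
  also have "(\<Sum>m=1..n. cI A (Fj 1) m (k, 0) 0 * cntF A (Fj 0) (n - m) 0 (k, 0))
      = (\<Sum>m=1..n. Sn A k m * Pn A k (n - m))"
    using k by (intro sum.cong refl) (simp add: cI_Sn Pn_def flip: zero_prod_def)
  also have "\<dots> = (\<Sum>m=0..n. Sn A k m * Pn A k (n - m))"
    using k by (simp add: sum.atLeast_Suc_atMost[of 0 n] Sn_at0 atLeastSucAtMost_greaterThanAtMost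
        flip: One_nat_def)
  finally show ?thesis .
qed

lemma Ln_1: "Ln A 1 n = Pn A 0 n"
  unfolding Ln_def Pn_def by (subst cntF_transl[where d = "(1, 0)"]) (simp add: Fj_shift zero_prod_def)

end


context wset begin

lemma first_visit_j:
  "cntF A (Fj j) n p q = cntF A (Fj (j + 1)) n p q
     + (\<Sum>m=1..n. cI A (Fj (j + 1)) m p (j, 0) * cntF A (Fj j) (n - m) (j, 0) q)"
  using first_visit[of "Fj j" "(j,0)" A n p q] Fj_upd[of j]
  by (simp add: Fj_def)

lemma telescope:
  "cntF A (Fj (- int t)) n 0 q = cntF A (Fj 0) n 0 q
     + (\<Sum>i=1..t. \<Sum>m=1..n. cI A (Fj (1 - int i)) m 0 (- int i, 0)
            * cntF A (Fj (- int i)) (n - m) (- int i, 0) q)"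
proof (induction t)
  case 0
  then show ?case by simp
next
  case (Suc t)
  have "cntF A (Fj (- int (Suc t))) n 0 q = cntF A (Fj (- int t)) n 0 q
     + (\<Sum>m=1..n. cI A (Fj (1 - int (Suc t))) m 0 (- int (Suc t), 0)
            * cntF A (Fj (- int (Suc t))) (n - m) (- int (Suc t), 0) q)"
    using first_visit_j[of "- int (Suc t)" n 0 q] by (simp add: algebra_simps)
  then show ?case using Suc by simp
qed

lemma cI_Fj_Sn:
  assumes "1 \<le> i"
  shows "cI A (Fj (1 - int i)) m 0 (- int i, 0) = Sn A (int i) m"
proof -
  have "cI A (Fj (1 - int i)) m 0 (- int i, 0) = cI A (Fj 1) m (int i, 0) 0"
    by (subst cI_transl[where d = "(- int i, 0)"]) (simp add: Fj_shift zero_prod_def)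
  also have "\<dots> = Sn A (int i) m" using assms by (intro cI_Sn) simp
  finally show ?thesis .
qed

lemma cntF_Fj_Pn:
  "cntF A (Fj (- int i)) r (- int i, 0) (k, 0) = Pn A (k + int i) r"
  unfolding Pn_def
  by (subst cntF_transl[where d = "(- int i, 0)"]) (simp add: Fj_shift zero_prod_def)

lemma W_decomp:
  assumes M: "int n * bnd A \<le> int M"
  shows "Wn A k 0 n = (\<Sum>i=0..M. \<Sum>m=0..n. Sn A (int i) m * Pn A (k + int i) (n - m))"
proof -
  have "Wn A k 0 n = cntF A (Fj (- int M)) n 0 (k, 0)"
    unfolding Wn_def
  proof (rule cntF_local[where b = "bnd A"])
    show "\<And>s. s \<in> A \<Longrightarrow> \<bar>fst s\<bar> \<le> bnd A" using bnd_ge[OF fin] by blast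
    show "0 \<le> bnd A" using bnd_nonneg[OF fin] .
    fix r :: "int \<times> int" assume "\<bar>fst r - fst (0::int\<times>int)\<bar> \<le> int n * bnd A"
    then show "False = Fj (- int M) r" using M by (auto simp: Fj_def)
  qed
  also have "\<dots> = cntF A (Fj 0) n 0 (k, 0)
     + (\<Sum>i=1..M. \<Sum>m=1..n. cI A (Fj (1 - int i)) m 0 (- int i, 0)
            * cntF A (Fj (- int i)) (n - m) (- int i, 0) (k, 0))"
    by (rule telescope)
  also have "\<dots> = Pn A k n + (\<Sum>i=1..M. \<Sum>m=1..n. Sn A (int i) m * Pn A (k + int i) (n - m))"
  proof -
    have "(\<Sum>m=1..n. cI A (Fj (1 - int i)) m 0 (- int i, 0)
            * cntF A (Fj (- int i)) (n - m) (- int i, 0) (k, 0))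
        = (\<Sum>m=1..n. Sn A (int i) m * Pn A (k + int i) (n - m))" if "i \<in> {1..M}" for i
      using that by (simp add: cI_Fj_Sn cntF_Fj_Pn)
    then show ?thesis unfolding Pn_def[symmetric] by simp
  qed
  also have "(\<Sum>i=1..M. \<Sum>m=1..n. Sn A (int i) m * Pn A (k + int i) (n - m))
      = (\<Sum>i=1..M. \<Sum>m=0..n. Sn A (int i) m * Pn A (k + int i) (n - m))"
    by (rule sum.cong[OF refl])
       (simp add: sum.atLeast_Suc_atMost[of 0 n] Sn_at0 atLeastSucAtMost_greaterThanAtMost flip: One_nat_def)
  also have "Pn A k n = (\<Sum>m=0..n. Sn A (int 0) m * Pn A (k + int 0) (n - m))"
  proof -
    have "(\<Sum>m=0..n. Sn A (int 0) m * Pn A (k + int 0) (n - m))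
        = (\<Sum>m=0..n. if m = 0 then Pn A k (n - m) else 0)"
      by (intro sum.cong) (auto simp: Sn_0)
    also have "\<dots> = Pn A k n" by (simp add: sum.delta)
    finally show ?thesis by simp
  qed
  also have "(\<Sum>m=0..n. Sn A (int 0) m * Pn A (k + int 0) (n - m))
      + (\<Sum>i=1..M. \<Sum>m=0..n. Sn A (int i) m * Pn A (k + int i) (n - m))
      = (\<Sum>i=0..M. \<Sum>m=0..n. Sn A (int i) m * Pn A (k + int i) (n - m))"
    by (simp add: sum.atLeast_Suc_atMost[of 0 M] atLeastSucAtMost_greaterThanAtMost flip: One_nat_def)
  finally show ?thesis .
qed

lemma W_sym: "Wn A k 0 n = Wn A (- k) 0 n"
proof (cases n)
  case 0
  then show ?thesis by (simp add: Wn_def zero_prod_def)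
next
  case (Suc n')
  have "Wn A k 0 n = cI A (\<lambda>_. False) n 0 (k, 0)"
    unfolding Wn_def using Suc by (simp add: cntF_cI)
  also have "\<dots> = cI A (\<lambda>_. False) n (k, 0) 0" by (rule cI_rev[OF neg])
  also have "\<dots> = cI A (\<lambda>_. False) n 0 (- k, 0)"
    by (subst cI_transl[where d = "(k, 0)"]) (simp add: zero_prod_def)
  also have "\<dots> = Wn A (- k) 0 n"
    unfolding Wn_def using Suc by (simp add: cntF_cI)
  finally show ?thesis .
qed

end

lemma W_rec: "Wn A k y (Suc n) = (\<Sum>s\<in>A. Wn A (k - fst s) (y - snd s) n)"
  unfolding Wn_def by (subst cntF_LS) (simp add: minus_prod_def)

lemma W_0: "Wn A k y 0 = (if k = 0 \<and> y = 0 then 1 else 0)"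
  by (auto simp: Wn_def zero_prod_def)

lemma Sn_bound: "finite A \<Longrightarrow> Sn A i n \<noteq> 0 \<Longrightarrow> \<bar>i\<bar> \<le> int n * bnd A"
  unfolding Sn_def using cntF_bound[of A "bnd A" "Fj 1" n 0 "(i, 0)"] bnd_ge by auto

lemma Pn_bound: "finite A \<Longrightarrow> Pn A i n \<noteq> 0 \<Longrightarrow> \<bar>i\<bar> \<le> int n * bnd A"
  unfolding Pn_def using cntF_bound[of A "bnd A" "Fj 0" n 0 "(i, 0)"] bnd_ge by auto

lemma Wn_bound: "finite A \<Longrightarrow> Wn A k y n \<noteq> 0 \<Longrightarrow> \<bar>k\<bar> \<le> int n * bnd A"
  unfolding Wn_def using cntF_bound[of A "bnd A" "\<lambda>_. False" n 0 "(k, y)"] bnd_ge by auto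


definition Sg :: "(int \<times> int) set \<Rightarrow> int \<Rightarrow> real fps" where
  "Sg A i = Abs_fps (\<lambda>n. real (Sn A i n))"
definition Pg :: "(int \<times> int) set \<Rightarrow> int \<Rightarrow> real fps" where
  "Pg A i = Abs_fps (\<lambda>n. real (Pn A i n))"
definition Lg :: "(int \<times> int) set \<Rightarrow> int \<Rightarrow> real fps" where
  "Lg A i = Abs_fps (\<lambda>n. real (Ln A i n))"
definition Eg :: "(int \<times> int) set \<Rightarrow> real fps" where
  "Eg A = Pg A 0"

lemma Eg_0: "Eg A $ 0 = 1"
  by (simp add: Eg_def Pg_def Pn_def zero_prod_def)

lemma Lgf_eq:
  assumes fin: "finite A" and k: "0 < k"
  shows "Lgf A k = Lg A k"
proof -
  have "loops A k n = WS A inH n (k, 0) (k, 0)" for n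
  proof -
    have nk: "\<not> inH (k, 0)" using k by (simp add: inH_def)
    have eq: "(\<forall>m\<le>n. \<not> inH (ws ! m)) = (\<forall>m. 1 \<le> m \<and> m \<le> n \<longrightarrow> \<not> inH (ws ! m))"
      if w0: "ws ! 0 = (k, 0)" for ws :: "(int \<times> int) list"
    proof
      assume "\<forall>m\<le>n. \<not> inH (ws ! m)" then show "\<forall>m. 1 \<le> m \<and> m \<le> n \<longrightarrow> \<not> inH (ws ! m)" by auto
    next
      assume r: "\<forall>m. 1 \<le> m \<and> m \<le> n \<longrightarrow> \<not> inH (ws ! m)"
      show "\<forall>m\<le>n. \<not> inH (ws ! m)"
      proof (intro allI impI)
        fix m assume "m \<le> n"
        then show "\<not> inH (ws ! m)" using r w0 nk by (cases m) auto
      qed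
    qed
    show ?thesis unfolding loops_def WS_def using eq by blast
  qed
  then show ?thesis
    using WS_card[OF fin, of inH] unfolding Lgf_def Lg_def Ln_def inH_Fj by simp
qed

lemma Sgf_eq:
  assumes fin: "finite A"
  shows "Sgf A i = Sg A i"
proof -
  have "swalks A i n = WS A inH n 0 (i, 0)" for n
    unfolding swalks_def WS_def by (simp add: zero_prod_def)
  then show ?thesis
    using WS_card[OF fin, of inH] unfolding Sgf_def Sg_def Sn_def inH_Fj by simp
qed

lemma Sg_0: "Sg A 0 = 1"
  by (rule fps_ext) (simp add: Sg_def Sn_0)

context wset begin

lemma Pg_conv: "0 < k \<Longrightarrow> Pg A k = Sg A k * Eg A"
  by (rule fps_ext) (simp add: Pg_def Sg_def Eg_def fps_mult_nth Pn_conv)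

lemma Lg_step: "0 < k \<Longrightarrow> Lg A (k + 1) = Lg A k + Sg A k * Pg A k"
  by (rule fps_ext) (simp add: Pg_def Sg_def Lg_def fps_mult_nth Ln_step)

lemma Lg_1: "Lg A 1 = Eg A"
  by (rule fps_ext) (simp add: Lg_def Eg_def Pg_def Ln_1)

lemma Lg_sum: "1 \<le> k \<Longrightarrow> Lg A (int k) = Eg A * (\<Sum>j<k. (Sg A (int j))\<^sup>2)"
proof (induction k rule: dec_induct)
  case base
  then show ?case by (simp add: Lg_1 Sg_0)
next
  case (step k)
  have "Lg A (int (Suc k)) = Lg A (int k) + Sg A (int k) * Pg A (int k)"
    using Lg_step[of "int k"] step by (simp add: add.commute)
  also have "\<dots> = Eg A * (\<Sum>j<Suc k. (Sg A (int j))\<^sup>2)"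
    using step Pg_conv[of "int k"] by (simp add: algebra_simps power2_eq_square)
  finally show ?case .
qed

end


lemma inverse_one_minus_X:
  "inverse (1 - fps_X :: real fps fps) = Abs_fps (\<lambda>_. 1)"
proof -
  define G :: "real fps fps" where "G = Abs_fps (\<lambda>_. 1)"
  have inv1: "inverse (1 :: real fps) = 1" by (rule fps_inverse_one') simp
  have "inverse (1 - fps_X :: real fps fps) = fps_right_inverse (1 - fps_X) (inverse ((1 - fps_X :: real fps fps) $ 0))"
    by (rule fps_inverse_def)
  also have "(1 - fps_X :: real fps fps) $ 0 = 1" by simp
  finally have "inverse (1 - fps_X :: real fps fps) = fps_right_inverse (1 - fps_X) 1"
    by (simp only: inv1)
  moreover have R: "(1 - fps_X) * fps_right_inverse (1 - fps_X :: real fps fps) 1 = 1"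
    by (rule fps_right_inverse) simp
  moreover have G: "(1 - fps_X) * G = 1"
  proof (rule fps_ext)
    fix n show "((1 - fps_X) * G) $ n = (1 :: real fps fps) $ n"
      by (cases n) (simp_all add: G_def algebra_simps fps_X_mult_nth)
  qed
  ultimately have "inverse (1 - fps_X :: real fps fps) = G"
  proof -
    assume i: "inverse (1 - fps_X :: real fps fps) = fps_right_inverse (1 - fps_X) 1"
    have "G = G * ((1 - fps_X) * fps_right_inverse (1 - fps_X :: real fps fps) 1)" using R by simp
    also have "\<dots> = ((1 - fps_X) * G) * fps_right_inverse (1 - fps_X :: real fps fps) 1"
      by (simp only: mult_ac)
    also have "\<dots> = fps_right_inverse (1 - fps_X :: real fps fps) 1" using G by simp
    finally show ?thesis using i by simp
  qed
  then show ?thesis by (simp add: G_def)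
qed

lemma final_coeff:
  fixes E :: "real fps" and T :: "nat \<Rightarrow> real fps"
  shows "(fps_X * inverse (1 - fps_X) * fps_const E * Abs_fps T) $ k
      = (if k = 0 then 0 else E * (\<Sum>j<k. T j))"
proof (cases k)
  case 0
  then show ?thesis by simp
next
  case (Suc m)
  have "(fps_X * inverse (1 - fps_X) * fps_const E * Abs_fps T) $ k
      = (inverse (1 - fps_X) * fps_const E * Abs_fps T) $ m"
    by (simp add: Suc mult.assoc)
  also have "\<dots> = (fps_const E * (Abs_fps (\<lambda>_. 1) * Abs_fps T)) $ m"
    by (simp add: inverse_one_minus_X mult_ac)
  also have "\<dots> = E * (Abs_fps (\<lambda>_. 1) * Abs_fps T) $ m"
    by (rule fps_mult_left_const_nth)
  also have "(Abs_fps (\<lambda>_. 1) * Abs_fps T) $ m = (\<Sum>i=0..m. T (m - i))"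
    by (simp add: fps_mult_nth)
  also have "(\<Sum>i=0..m. T (m - i)) = (\<Sum>i=0..m. T i)"
    by (subst sum.atLeastAtMost_rev) simp
  finally show ?thesis by (simp add: Suc lessThan_Suc_atMost atLeast0AtMost)
qed




definition lsum :: "(int \<Rightarrow> real) \<Rightarrow> int \<Rightarrow> real fls" where
  "lsum c N = (\<Sum>k\<in>{-N..N}. fls_const (c k) * fls_X_intpow k)"

lemma lsum_nth: "lsum c N $$ m = (if -N \<le> m \<and> m \<le> N then c m else 0)"
proof -
  have "lsum c N $$ m = (\<Sum>k\<in>{-N..N}. if m = k then c k else 0)"
    unfolding lsum_def fls_nth_sum by (intro sum.cong refl) simp
  also have "\<dots> = (if -N \<le> m \<and> m \<le> N then c m else 0)"
    by (subst sum.delta') auto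
  finally show ?thesis .
qed

lemma Apoly_mult_nth:
  "(Apoly A j * f) $$ k = (\<Sum>p\<in>{p\<in>A. snd p = j}. f $$ (k - fst p))"
  unfolding Apoly_def sum_distrib_right fls_nth_sum
  by (intro sum.cong refl) (simp add: fls_X_intpow_times_conv_shift)

definition Lx :: "(int \<times> int) set \<Rightarrow> nat \<Rightarrow> int \<Rightarrow> real fls" where
  "Lx A n y = lsum (\<lambda>k. real (Wn A k y n)) (int n * bnd A)"

lemma Lx_nth: "finite A \<Longrightarrow> Lx A n y $$ k = real (Wn A k y n)"
  unfolding Lx_def lsum_nth using Wn_bound[of A k y n] by (cases "Wn A k y n = 0") (auto simp: abs_le_iff)

lemma sum_split3:
  assumes fin: "finite A" and small: "\<And>s. s \<in> A \<Longrightarrow> \<bar>snd s\<bar> \<le> (1::int)"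
  shows "(\<Sum>s\<in>A. g s) = (\<Sum>s\<in>{s\<in>A. snd s = 0}. g s) + (\<Sum>s\<in>{s\<in>A. snd s = 1}. g s)
          + (\<Sum>s\<in>{s\<in>A. snd s = -1}. g s)"
proof -
  have "A = {s\<in>A. snd s = 0} \<union> {s\<in>A. snd s = 1} \<union> {s\<in>A. snd s = -1}"
  proof -
    have "snd s = 0 \<or> snd s = 1 \<or> snd s = -1" if "s \<in> A" for s
      using small[OF that] by arith
    then show ?thesis by blast
  qed
  then have "(\<Sum>s\<in>A. g s) = (\<Sum>s\<in>{s\<in>A. snd s = 0} \<union> {s\<in>A. snd s = 1} \<union> {s\<in>A. snd s = -1}. g s)"
    by simp
  also have "\<dots> = (\<Sum>s\<in>{s\<in>A. snd s = 0} \<union> {s\<in>A. snd s = 1}. g s) + (\<Sum>s\<in>{s\<in>A. snd s = -1}. g s)"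
    by (rule sum.union_disjoint) (use fin in auto)
  also have "(\<Sum>s\<in>{s\<in>A. snd s = 0} \<union> {s\<in>A. snd s = 1}. g s)
      = (\<Sum>s\<in>{s\<in>A. snd s = 0}. g s) + (\<Sum>s\<in>{s\<in>A. snd s = 1}. g s)"
    by (rule sum.union_disjoint) (use fin in auto)
  finally show ?thesis .
qed

lemma sum_flip:
  fixes A :: "(int \<times> int) set"
  assumes sym: "\<And>i j. (i, j) \<in> A \<Longrightarrow> (i, - j) \<in> A"
  shows "(\<Sum>s\<in>{s\<in>A. snd s = -1}. g (fst s)) = (\<Sum>s\<in>{s\<in>A. snd s = 1}. g (fst s))"
  by (rule sum.reindex_bij_witness[where i = "\<lambda>(i, j). (i, - j)" and j = "\<lambda>(i, j). (i, - j)"])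
     (auto dest: sym)

lemma Lx_rec:
  assumes fin: "finite A" and small: "\<And>s. s \<in> A \<Longrightarrow> \<bar>snd s\<bar> \<le> (1::int)"
    and sym: "\<And>i j. (i, j) \<in> A \<Longrightarrow> (i, - j) \<in> A"
  shows "Lx A (Suc n) y = Apoly A 0 * Lx A n y + Apoly A 1 * (Lx A n (y - 1) + Lx A n (y + 1))"
proof (rule fls_eqI)
  fix k
  have "Lx A (Suc n) y $$ k = (\<Sum>s\<in>A. real (Wn A (k - fst s) (y - snd s) n))"
    by (simp add: Lx_nth[OF fin] W_rec)
  also have "\<dots> = (\<Sum>s\<in>{s\<in>A. snd s = 0}. real (Wn A (k - fst s) (y - snd s) n))
      + (\<Sum>s\<in>{s\<in>A. snd s = 1}. real (Wn A (k - fst s) (y - snd s) n))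
      + (\<Sum>s\<in>{s\<in>A. snd s = -1}. real (Wn A (k - fst s) (y - snd s) n))"
    by (rule sum_split3[OF fin small])
  also have "(\<Sum>s\<in>{s\<in>A. snd s = -1}. real (Wn A (k - fst s) (y - snd s) n))
      = (\<Sum>s\<in>{s\<in>A. snd s = -1}. real (Wn A (k - fst s) (y + 1) n))"
    by (intro sum.cong refl) simp
  also have "\<dots> = (\<Sum>s\<in>{s\<in>A. snd s = 1}. real (Wn A (k - fst s) (y + 1) n))"
    by (rule sum_flip[OF sym])
  also have "(\<Sum>s\<in>{s\<in>A. snd s = 0}. real (Wn A (k - fst s) (y - snd s) n))
      = (\<Sum>s\<in>{s\<in>A. snd s = 0}. real (Wn A (k - fst s) y n))"
    by (intro sum.cong refl) simp
  also have "(\<Sum>s\<in>{s\<in>A. snd s = 1}. real (Wn A (k - fst s) (y - snd s) n))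
      = (\<Sum>s\<in>{s\<in>A. snd s = 1}. real (Wn A (k - fst s) (y - 1) n))"
    by (intro sum.cong refl) simp
  finally show "Lx A (Suc n) y $$ k = (Apoly A 0 * Lx A n y + Apoly A 1 * (Lx A n (y - 1) + Lx A n (y + 1))) $$ k"
    by (simp add: Apoly_mult_nth Lx_nth[OF fin] distrib_left sum.distrib)
qed

lemma Lx_0: "Lx A 0 y = (if y = 0 then 1 else 0)"
  by (simp add: Lx_def lsum_def W_0)




lemma rec_unique:
  fixes f g :: "int \<Rightarrow> 'a::comm_ring_1 fps"
  assumes f: "\<And>y. f y = (if y = 0 then 1 else 0) + fps_X * (fps_const a0 * f y + fps_const a1 * (f (y - 1) + f (y + 1)))"
    and g: "\<And>y. g y = (if y = 0 then 1 else 0) + fps_X * (fps_const a0 * g y + fps_const a1 * (g (y - 1) + g (y + 1)))"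
  shows "f y = g y"
proof -
  have "\<forall>y. f y $ n = g y $ n" for n
  proof (induction n)
    case 0
    show ?case
    proof
      fix y
      show "f y $ 0 = g y $ 0" by (subst f, subst g) simp
    qed
  next
    case (Suc n)
    show ?case
    proof
      fix y
      show "f y $ Suc n = g y $ Suc n"
        by (subst f, subst g) (simp add: Suc)
    qed
  qed
  then show ?thesis by (intro fps_ext) blast
qed

lemma shiftX:
  fixes f :: "'a::comm_ring_1 fps"
  shows "f $ 0 = 0 \<Longrightarrow> fps_X * fps_shift (Suc 0) f = f"
  by (intro fps_ext, rename_tac n, case_tac n) (simp_all add: fps_X_mult_nth)

lemma mult_nth_1: "(f * g) $ Suc 0 = f $ 0 * g $ Suc 0 + f $ Suc 0 * (g $ 0 :: 'a::comm_ring_1)"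
  by (simp add: fps_mult_nth)

locale dset =
  fixes A :: "(int \<times> int) set"
  assumes fin: "finite A"
    and small: "\<And>s. s \<in> A \<Longrightarrow> \<bar>snd s\<bar> \<le> (1::int)"
    and sym: "\<And>i j. (i, j) \<in> A \<Longrightarrow> (i, - j) \<in> A"
    and a1nz: "Apoly A 1 \<noteq> 0"
begin

definition "Phi y = Abs_fps (\<lambda>n. Lx A n y)"
definition "aa = 1 - fps_X * fps_const (Apoly A 0)"
definition "cc = fps_X * fps_const (Apoly A 1)"
definition "WW = fps_radical (\<lambda>_ _. 1) 2 (inverse (delta A))"
definition "VV = inverse WW"
definition "ZZ = fps_const (inverse (2 * Apoly A 1)) * fps_shift 1 (aa - VV)"
definition "Psi y = WW * ZZ ^ nat \<bar>y\<bar>"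

lemma Phi_rec:
  "Phi y = (if y = 0 then 1 else 0) + fps_X * (fps_const (Apoly A 0) * Phi y
      + fps_const (Apoly A 1) * (Phi (y - 1) + Phi (y + 1)))"
proof (rule fps_ext)
  fix n show "Phi y $ n = ((if y = 0 then 1 else 0) + fps_X * (fps_const (Apoly A 0) * Phi y
      + fps_const (Apoly A 1) * (Phi (y - 1) + Phi (y + 1)))) $ n"
    by (cases n) (simp_all add: Phi_def Lx_0 Lx_rec[OF fin small sym] fps_X_mult_nth)
qed

lemma delta_eq: "delta A = aa\<^sup>2 - 4 * cc\<^sup>2"
  by (simp add: delta_def aa_def cc_def power_mult_distrib fps_const_power)

lemma delta_0: "delta A $ 0 = 1"
  by (simp add: delta_eq aa_def cc_def power2_eq_square)

lemma delta_1: "delta A $ Suc 0 = - 2 * Apoly A 0"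
  by (simp add: delta_eq aa_def cc_def power2_eq_square mult_nth_1)

lemma WW_sq: "WW\<^sup>2 = inverse (delta A)"
proof -
  have "(fps_radical (\<lambda>_ _. 1) (Suc 1) (inverse (delta A))) ^ (Suc 1) = inverse (delta A)"
    by (rule iffD1[OF power_radical]) (simp_all add: delta_0)
  then show ?thesis by (simp add: WW_def numeral_2_eq_2)
qed

lemma WW_0: "WW $ 0 = 1"
  by (simp add: WW_def)

lemma WV: "WW * VV = 1"
  unfolding VV_def by (rule inverse_mult_eq_1') (simp add: WW_0)

lemma VV_0: "VV $ 0 = 1"
  by (simp add: VV_def WW_0)

lemma VV_sq: "VV\<^sup>2 = delta A"
proof -
  have "VV\<^sup>2 = inverse (WW\<^sup>2)" by (simp add: VV_def fps_inverse_power)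
  also have "\<dots> = delta A" by (simp add: WW_sq delta_0)
  finally show ?thesis .
qed

lemma WW_1: "WW $ Suc 0 = Apoly A 0"
proof -
  have i1: "inverse (delta A) $ Suc 0 = 2 * Apoly A 0"
  proof -
    have "(delta A * inverse (delta A)) $ Suc 0 = 0"
      by (simp add: inverse_mult_eq_1' delta_0)
    then have "inverse (delta A) $ Suc 0 + delta A $ Suc 0 = 0" by (simp add: mult_nth_1 delta_0)
    then show ?thesis by (simp add: delta_1 add_eq_0_iff)
  qed
  have "(WW * WW) $ Suc 0 = 2 * Apoly A 0" using WW_sq i1 by (simp add: power2_eq_square)
  then have "2 * WW $ Suc 0 = 2 * Apoly A 0" by (simp add: mult_nth_1 WW_0)
  then show ?thesis by simp
qed

lemma VV_1: "VV $ Suc 0 = - Apoly A 0"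
proof -
  have "(WW * VV) $ Suc 0 = 0" by (simp add: WV)
  then show ?thesis by (simp add: mult_nth_1 WW_0 VV_0 WW_1 add_eq_0_iff)
qed

lemma aV0: "(aa - VV) $ 0 = 0"
  by (simp add: aa_def VV_0)

lemma twocZ: "2 * cc * ZZ = aa - VV"
proof -
  have "2 * cc * ZZ = fps_X * fps_shift (Suc 0) (aa - VV) * fps_const (2 * Apoly A 1 * inverse (2 * Apoly A 1))"
    by (simp add: cc_def ZZ_def mult_ac flip: fps_const_mult)
  also have "2 * Apoly A 1 * inverse (2 * Apoly A 1) = 1"
    using a1nz by simp
  finally show ?thesis by (simp add: shiftX[OF aV0])
qed

lemma ZZ_0: "ZZ $ 0 = 0"
  by (simp add: ZZ_def aa_def VV_1)

lemma cc_nz: "cc \<noteq> 0"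
proof
  assume "cc = 0"
  then have "cc $ 1 = 0" by simp
  then show False using a1nz by (simp add: cc_def)
qed

lemma quad: "cc * ZZ\<^sup>2 - aa * ZZ + cc = 0"
proof -
  have "(4 * cc) * (cc * ZZ\<^sup>2 - aa * ZZ + cc) = (2 * cc * ZZ)\<^sup>2 - 2 * aa * (2 * cc * ZZ) + 4 * cc\<^sup>2"
    by (simp add: algebra_simps power2_eq_square)
  also have "\<dots> = VV\<^sup>2 - delta A"
    unfolding twocZ delta_eq by (simp add: algebra_simps power2_eq_square)
  also have "\<dots> = 0" by (simp add: VV_sq)
  finally have "(4 * cc) * (cc * ZZ\<^sup>2 - aa * ZZ + cc) = 0" .
  moreover have "4 * cc \<noteq> 0" using cc_nz by simp
  ultimately show ?thesis by simp
qed

lemma Psi_rec: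
  "Psi y = (if y = 0 then 1 else 0) + fps_X * (fps_const (Apoly A 0) * Psi y
      + fps_const (Apoly A 1) * (Psi (y - 1) + Psi (y + 1)))"
proof -
  have key: "aa * Psi y = (if y = 0 then 1 else 0) + cc * (Psi (y - 1) + Psi (y + 1))"
  proof (cases "y = 0")
    case True
    have "aa * WW = 1 + cc * (2 * WW * ZZ)"
    proof -
      have "aa * WW - cc * (2 * WW * ZZ) = WW * (aa - 2 * cc * ZZ)" by (simp add: algebra_simps)
      also have "\<dots> = 1" by (simp add: twocZ WV)
      finally show ?thesis by (simp add: algebra_simps)
    qed
    then show ?thesis using True by (simp add: Psi_def)
  next
    case False
    define j where "j = nat \<bar>y\<bar> - 1"
    have yj: "nat \<bar>y\<bar> = Suc j" using False by (simp add: j_def)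
    have e: "{nat \<bar>y - 1\<bar>, nat \<bar>y + 1\<bar>} = {j, Suc (Suc j)}" using False yj by auto
    have "aa * Psi y = WW * ZZ ^ j * (aa * ZZ)" by (simp add: Psi_def yj algebra_simps)
    also have "aa * ZZ = cc * ZZ\<^sup>2 + cc" using quad by (simp add: algebra_simps)
    also have "WW * ZZ ^ j * (cc * ZZ\<^sup>2 + cc) = cc * (WW * ZZ ^ j + WW * ZZ ^ Suc (Suc j))"
      by (simp add: algebra_simps power2_eq_square)
    also have "WW * ZZ ^ j + WW * ZZ ^ Suc (Suc j) = Psi (y - 1) + Psi (y + 1)"
    proof (cases "y > 0")
      case True
      then have h: "nat \<bar>y - 1\<bar> = j" "nat \<bar>y + 1\<bar> = Suc (Suc j)" using yj by auto
      show ?thesis unfolding Psi_def by (simp only: h)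
    next
      case False
      then have h: "nat \<bar>y - 1\<bar> = Suc (Suc j)" "nat \<bar>y + 1\<bar> = j" using yj \<open>y \<noteq> 0\<close> by auto
      show ?thesis unfolding Psi_def h by (simp add: add.commute)
    qed
    finally show ?thesis using False by simp
  qed
  show ?thesis
  proof -
    have "Psi y = aa * Psi y + fps_X * fps_const (Apoly A 0) * Psi y" by (simp add: aa_def algebra_simps)
    also note key
    finally show ?thesis by (simp add: cc_def algebra_simps)
  qed
qed

lemma Phi_0_eq: "Phi 0 = WW"
proof -
  have "Phi 0 = Psi 0" by (rule rec_unique[OF Phi_rec Psi_rec])
  then show ?thesis by (simp add: Psi_def)
qed

lemma delta_W: "delta A * (Phi 0)\<^sup>2 = 1"
  by (simp add: Phi_0_eq WW_sq inverse_mult_eq_1' delta_0)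

end




definition fmap :: "('a \<Rightarrow> 'b) \<Rightarrow> 'a fps \<Rightarrow> 'b fps" where
  "fmap h f = Abs_fps (\<lambda>n. h (f $ n))"

lemma fmap_nth [simp]: "fmap h f $ n = h (f $ n)"
  by (simp add: fmap_def)

definition pinv :: "'a::comm_ring_1 fps \<Rightarrow> 'a fps" where
  "pinv f = fps_right_inverse f 1"

lemma pinv: "f $ 0 = 1 \<Longrightarrow> f * pinv f = 1"
  unfolding pinv_def by (rule fps_right_inverse) simp

lemma pinv_0: "pinv f $ 0 = 1"
  by (simp add: pinv_def)

lemma inv_unique: "f * g = 1 \<Longrightarrow> f * g' = (1::'a::comm_ring_1) \<Longrightarrow> g = g'"
  by (metis mult.assoc mult.commute mult_1_right)

lemma pinv_eq: "f $ 0 = 1 \<Longrightarrow> f * g = 1 \<Longrightarrow> pinv f = g"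
  by (rule inv_unique[OF pinv]) auto

lemma pinv_inverse: "f $ 0 = (1::'a::field) \<Longrightarrow> pinv f = inverse f"
  by (rule pinv_eq) (auto intro: inverse_mult_eq_1')

locale rhom =
  fixes h :: "'a::comm_ring_1 \<Rightarrow> 'b::comm_ring_1"
  assumes hadd: "\<And>a b. h (a + b) = h a + h b"
    and hmult: "\<And>a b. h (a * b) = h a * h b"
    and h1: "h 1 = 1"
    and h0: "h 0 = 0"
begin

lemma hsum: "h (\<Sum>x\<in>S. f x) = (\<Sum>x\<in>S. h (f x))"
  by (induction S rule: infinite_finite_induct) (simp_all add: h0 hadd)

lemma hminus: "h (a - b) = h a - h b"
  by (metis add_diff_cancel hadd diff_add_cancel)

lemma fmap_mult: "fmap h (f * g) = fmap h f * fmap h g"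
  by (rule fps_ext) (simp add: fps_mult_nth hsum hmult)

lemma fmap_add: "fmap h (f + g) = fmap h f + fmap h g"
  by (rule fps_ext) (simp add: hadd)

lemma fmap_one: "fmap h 1 = 1"
  by (rule fps_ext) (simp add: h1 h0 fps_one_nth)

lemma fmap_const: "fmap h (fps_const c) = fps_const (h c)"
  by (rule fps_ext) (simp add: h0)

lemma fmap_power: "fmap h (f ^ n) = fmap h f ^ n"
  by (induction n) (simp_all add: fmap_one fmap_mult)

lemma fmap_pinv: "f $ 0 = 1 \<Longrightarrow> fmap h (pinv f) = pinv (fmap h f)"
proof -
  assume f0: "f $ 0 = 1"
  have "fmap h f * fmap h (pinv f) = 1"
    by (simp only: fmap_mult[symmetric] pinv[OF f0] fmap_one)
  then show ?thesis by (intro pinv_eq[symmetric]) (simp_all add: f0 h1)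
qed

end

lemma rhom_fls_const: "rhom (fls_const :: real \<Rightarrow> real fls)"
  by unfold_locales (simp_all add: fls_plus_const)

lemma rhom_pconst: "rhom (\<lambda>c::real. [:c:])"
  by unfold_locales simp_all

lemma rhom_ev0: "rhom (\<lambda>p::real poly. poly p 0)"
  by unfold_locales simp_all

definition ev :: "real fls \<Rightarrow> real poly \<Rightarrow> real fls" where
  "ev g p = poly (map_poly fls_const p) g"

lemma fls_const_sum: "fls_const (\<Sum>x\<in>S. f x) = (\<Sum>x\<in>S. fls_const (f x))"
  by (induction S rule: infinite_finite_induct) (simp_all add: fls_plus_const[symmetric])

lemma map_poly_fls_const_mult:
  "map_poly fls_const (p * q) = map_poly fls_const p * map_poly (fls_const :: real \<Rightarrow> real fls) q"
  by (rule poly_eqI) (simp add: coeff_map_poly coeff_mult fls_const_sum)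

lemma map_poly_fls_const_add:
  "map_poly fls_const (p + q) = map_poly fls_const p + map_poly (fls_const :: real \<Rightarrow> real fls) q"
  by (rule poly_eqI) (simp add: coeff_map_poly fls_plus_const)

lemma rhom_ev: "rhom (ev g)"
  by unfold_locales (simp_all add: ev_def map_poly_fls_const_mult map_poly_fls_const_add)

lemma map_poly_pconst: "map_poly (fls_const :: real \<Rightarrow> real fls) [:c:] = [:fls_const c:]"
  by (rule poly_eqI) (simp add: coeff_map_poly coeff_pCons split: nat.split)

lemma ev_const: "ev g [:c:] = fls_const c"
  by (simp add: ev_def map_poly_pconst)

lemma poly_x_ev: "poly_x p = ev fls_X p"
proof -
  have d: "degree (map_poly (fls_const :: real \<Rightarrow> real fls) p) = degree p"
    by (rule degree_map_poly) (simp add: fls_const_nonzero)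
  show ?thesis
    unfolding poly_x_def ev_def poly_altdef d
    by (intro sum.cong refl) (simp add: coeff_map_poly fls_X_power_conv_shift_1)
qed

lemma poly_xinv_ev: "poly_xinv p = ev fls_X_inv p"
proof -
  have d: "degree (map_poly (fls_const :: real \<Rightarrow> real fls) p) = degree p"
    by (rule degree_map_poly) (simp add: fls_const_nonzero)
  show ?thesis
    unfolding poly_xinv_def ev_def poly_altdef d
    by (intro sum.cong refl) (simp add: coeff_map_poly fls_X_inv_power_conv_shift_1)
qed

lemma rhom_poly_x: "rhom poly_x"
  using rhom_ev[of fls_X] by (simp add: poly_x_ev[abs_def])

lemma rhom_poly_xinv: "rhom poly_xinv"
  using rhom_ev[of fls_X_inv] by (simp add: poly_xinv_ev[abs_def])

lemma poly_x_const: "poly_x [:c:] = fls_const c"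
  by (simp add: poly_x_ev ev_const)

lemma poly_xinv_const: "poly_xinv [:c:] = fls_const c"
  by (simp add: poly_xinv_ev ev_const)

lemma poly_x_nth: "poly_x q $$ m = (if 0 \<le> m then coeff q (nat m) else 0)"
proof -
  have "poly_x q $$ m = (\<Sum>i\<le>degree q. if m = int i then coeff q i else 0)"
    unfolding poly_x_def fls_nth_sum by (intro sum.cong refl) simp
  also have "\<dots> = (if 0 \<le> m then coeff q (nat m) else 0)"
  proof (cases "0 \<le> m")
    case True
    then have "(\<Sum>i\<le>degree q. if m = int i then coeff q i else 0) = (\<Sum>i\<le>degree q. if i = nat m then coeff q i else 0)"
      by (intro sum.cong refl) auto
    also have "\<dots> = coeff q (nat m)" by (simp add: coeff_eq_0 not_le)
    finally show ?thesis using True by simp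
  next
    case False
    then show ?thesis by (intro trans[OF sum.neutral]) auto
  qed
  finally show ?thesis .
qed

lemma poly_xinv_nth: "poly_xinv q $$ m = (if m \<le> 0 then coeff q (nat (- m)) else 0)"
proof -
  have "poly_xinv q $$ m = (\<Sum>i\<le>degree q. if m = - int i then coeff q i else 0)"
    unfolding poly_xinv_def fls_nth_sum by (intro sum.cong refl) simp
  also have "\<dots> = (if m \<le> 0 then coeff q (nat (- m)) else 0)"
  proof (cases "m \<le> 0")
    case True
    then have "(\<Sum>i\<le>degree q. if m = - int i then coeff q i else 0) = (\<Sum>i\<le>degree q. if i = nat (- m) then coeff q i else 0)"
      by (intro sum.cong refl) auto
    also have "\<dots> = coeff q (nat (- m))" by (simp add: coeff_eq_0 not_le)
    finally show ?thesis using True by simp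
  next
    case False
    then show ?thesis by (intro trans[OF sum.neutral]) auto
  qed
  finally show ?thesis .
qed

lemma poly_x_mult_nth:
  "(poly_x p * g) $$ k = (\<Sum>i\<le>degree p. coeff p i * g $$ (k - int i))"
  unfolding poly_x_def sum_distrib_right fls_nth_sum
  by (intro sum.cong refl)
     (simp only: mult.assoc, simp only: fls_X_intpow_times_conv_shift(1) fls_mult_const_nth fls_shift_nth, simp)

lemma poly_xinv_mult_nth:
  "(poly_xinv p * g) $$ k = (\<Sum>i\<le>degree p. coeff p i * g $$ (k + int i))"
  unfolding poly_xinv_def sum_distrib_right fls_nth_sum
  by (intro sum.cong refl)
     (simp only: mult.assoc, simp only: fls_X_intpow_times_conv_shift(1) fls_mult_const_nth fls_shift_nth, simp)

lemma sum_degree_extend: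
  fixes p :: "real poly" and F :: "nat \<Rightarrow> real"
  shows "degree p \<le> N \<Longrightarrow> (\<Sum>i\<le>degree p. coeff p i * F i) = (\<Sum>i\<le>N. coeff p i * F i)"
  by (rule sum.mono_neutral_left) (auto simp: coeff_eq_0)




section \<open>Uniqueness of the canonical factorization\<close>

lemma coeff_dep:
  "(\<And>i. i \<le> m \<Longrightarrow> x $ i = x' $ i) \<Longrightarrow> (\<And>i. i \<le> m \<Longrightarrow> y $ i = y' $ i) \<Longrightarrow> (x * y) $ m = (x' * y') $ m"
  by (simp add: fps_mult_nth)

lemma L2:
  fixes x y x' y' :: "'a::comm_ring_1 fps"
  assumes n: "1 \<le> n" and x0: "x $ 0 = 1" "x' $ 0 = 1" and y0: "y $ 0 = 1" "y' $ 0 = 1"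
    and eq: "\<And>i. i < n \<Longrightarrow> x $ i = x' $ i \<and> y $ i = y' $ i"
  shows "(x * y) $ n - (x' * y') $ n = (x $ n - x' $ n) + (y $ n - y' $ n)"
proof -
  have "(x * y) $ n - (x' * y') $ n = (\<Sum>i=0..n. x $ i * y $ (n - i) - x' $ i * y' $ (n - i))"
    by (simp add: fps_mult_nth sum_subtractf)
  also have "\<dots> = (\<Sum>i=0..n. (if i = n then x $ n - x' $ n else 0) + (if i = 0 then y $ n - y' $ n else 0))"
  proof (intro sum.cong refl)
    fix i assume i: "i \<in> {0..n}"
    show "x $ i * y $ (n - i) - x' $ i * y' $ (n - i)
        = (if i = n then x $ n - x' $ n else 0) + (if i = 0 then y $ n - y' $ n else 0)"
    proof (cases "i = 0")
      case True then show ?thesis using n x0 by simp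
    next
      case False
      show ?thesis
      proof (cases "i = n")
        case True then show ?thesis using False y0 by simp
      next
        case False': False
        then have "i < n" "n - i < n" using i False by auto
        then show ?thesis using eq False False' by auto
      qed
    qed
  qed
  also have "\<dots> = (x $ n - x' $ n) + (y $ n - y' $ n)"
    by (simp add: sum.distrib)
  finally show ?thesis .
qed

lemma L3:
  fixes x y z x' y' z' :: "'a::comm_ring_1 fps"
  assumes n: "1 \<le> n" and x0: "x $ 0 = 1" "x' $ 0 = 1" and y0: "y $ 0 = 1" "y' $ 0 = 1"
    and z0: "z $ 0 = 1" "z' $ 0 = 1"
    and eq: "\<And>i. i < n \<Longrightarrow> x $ i = x' $ i \<and> y $ i = y' $ i \<and> z $ i = z' $ i"
  shows "(x * y * z) $ n - (x' * y' * z') $ n = (x $ n - x' $ n) + (y $ n - y' $ n) + (z $ n - z' $ n)"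
proof -
  have "(x * y * z) $ n - (x' * y' * z') $ n = ((x * y) $ n - (x' * y') $ n) + (z $ n - z' $ n)"
  proof (rule L2[OF n])
    show "(x * y) $ 0 = 1" "(x' * y') $ 0 = 1" using x0 y0 by simp_all
    show "z $ 0 = 1" "z' $ 0 = 1" using z0 by simp_all
    fix i assume i: "i < n"
    have "(x * y) $ i = (x' * y') $ i" using eq i by (intro coeff_dep) auto
    then show "(x * y) $ i = (x' * y') $ i \<and> z $ i = z' $ i" using eq i by simp
  qed
  also have "(x * y) $ n - (x' * y') $ n = (x $ n - x' $ n) + (y $ n - y' $ n)"
    using eq by (intro L2[OF n x0 y0]) auto
  finally show ?thesis .
qed

lemma cf_unfold:
  "canonical_factorization A D Dl Dlb \<longleftrightarrow>
     D $ 0 = 1 \<and>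
     (\<forall>n. poly (Dl $ n) 0 = (if n = 0 then 1 else 0)) \<and>
     (\<forall>n. poly (Dlb $ n) 0 = (if n = 0 then 1 else 0)) \<and>
     Dl $ 0 = 1 \<and> Dlb $ 0 = 1 \<and>
     delta A = fmap fls_const D * fmap poly_x Dl * fmap poly_xinv Dlb"
  unfolding canonical_factorization_def fmap_def by simp

lemma cf_unique:
  assumes c1: "canonical_factorization A D1 L1 M1" and c2: "canonical_factorization A D2 L2 M2"
  shows "D1 = D2"
proof -
  note c1' = c1[unfolded cf_unfold] and c2' = c2[unfolded cf_unfold]
  have "\<forall>i\<le>n. D1 $ i = D2 $ i \<and> L1 $ i = L2 $ i \<and> M1 $ i = M2 $ i" for n
  proof (induction n)
    case 0
    then show ?case using c1' c2' by simp
  next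
    case (Suc m)
    define n where "n = Suc m"
    have IH: "\<And>i. i < n \<Longrightarrow> D1 $ i = D2 $ i \<and> L1 $ i = L2 $ i \<and> M1 $ i = M2 $ i"
      using Suc unfolding n_def by auto
    have p1: "poly_x 1 = 1" "poly_xinv 1 = 1"
      using rhom.h1[OF rhom_poly_x] rhom.h1[OF rhom_poly_xinv] by simp_all
    have "(fmap fls_const D1 * fmap poly_x L1 * fmap poly_xinv M1) $ n
        - (fmap fls_const D2 * fmap poly_x L2 * fmap poly_xinv M2) $ n
        = (fmap fls_const D1 $ n - fmap fls_const D2 $ n) + (fmap poly_x L1 $ n - fmap poly_x L2 $ n)
          + (fmap poly_xinv M1 $ n - fmap poly_xinv M2 $ n)"
      by (rule L3) (use c1' c2' IH p1 in \<open>simp_all add: n_def\<close>)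
    also have "\<dots> = (fls_const (D1 $ n) - fls_const (D2 $ n)) + (poly_x (L1 $ n) - poly_x (L2 $ n))
          + (poly_xinv (M1 $ n) - poly_xinv (M2 $ n))" by simp
    finally have T: "(fmap fls_const D1 * fmap poly_x L1 * fmap poly_xinv M1) $ n
        - (fmap fls_const D2 * fmap poly_x L2 * fmap poly_xinv M2) $ n
        = (fls_const (D1 $ n) - fls_const (D2 $ n)) + (poly_x (L1 $ n) - poly_x (L2 $ n))
          + (poly_xinv (M1 $ n) - poly_xinv (M2 $ n))" .
    note T[symmetric]
    also have "(fmap fls_const D1 * fmap poly_x L1 * fmap poly_xinv M1) $ n
        - (fmap fls_const D2 * fmap poly_x L2 * fmap poly_xinv M2) $ n = 0"
      using c1' c2' by simp
    finally have E: "(fls_const (D1 $ n) - fls_const (D2 $ n)) + (poly_x (L1 $ n) - poly_x (L2 $ n))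
          + (poly_xinv (M1 $ n) - poly_xinv (M2 $ n)) = 0" by simp
    have E': "(if j = 0 then D1 $ n - D2 $ n else 0)
        + (if 0 \<le> j then coeff (L1 $ n) (nat j) - coeff (L2 $ n) (nat j) else 0)
        + (if j \<le> 0 then coeff (M1 $ n) (nat (- j)) - coeff (M2 $ n) (nat (- j)) else 0) = 0" for j
    proof -
      have "(fls_const (D1 $ n) - fls_const (D2 $ n) + (poly_x (L1 $ n) - poly_x (L2 $ n))
          + (poly_xinv (M1 $ n) - poly_xinv (M2 $ n))) $$ j = 0" using E by simp
      then show ?thesis by (auto simp: poly_x_nth poly_xinv_nth split: if_splits)
    qed
    have z1: "coeff (L1 $ n) 0 = 0" "coeff (L2 $ n) 0 = 0" "coeff (M1 $ n) 0 = 0" "coeff (M2 $ n) 0 = 0"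
      using c1' c2' by (simp_all add: n_def flip: poly_0_coeff_0)
    have dD: "D1 $ n = D2 $ n" using E'[of 0] z1 by simp
    have dL: "L1 $ n = L2 $ n"
    proof (rule poly_eqI)
      fix t show "coeff (L1 $ n) t = coeff (L2 $ n) t"
      proof (cases "t = 0")
        case True then show ?thesis using z1 by simp
      next
        case False then show ?thesis using E'[of "int t"] by simp
      qed
    qed
    have dM: "M1 $ n = M2 $ n"
    proof (rule poly_eqI)
      fix t show "coeff (M1 $ n) t = coeff (M2 $ n) t"
      proof (cases "t = 0")
        case True then show ?thesis using z1 by simp
      next
        case False then show ?thesis using E'[of "- int t"] by simp
      qed
    qed
    show ?case using Suc dD dL dM unfolding n_def by (auto simp: le_Suc_eq)
  qed
  then show ?thesis by (intro fps_ext) blast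
qed




lemma fmap_fmap: "fmap g (fmap h f) = fmap (\<lambda>x. g (h x)) f"
  by (rule fps_ext) simp

lemma coeff_sum_monom': "coeff (\<Sum>i\<le>N. monom (c i) i) j = (if j \<le> N then c j else 0)"
  by (simp add: coeff_sum sum.delta)

locale mctx =
  fixes A :: "(int \<times> int) set"
  assumes fin: "finite A" and neg: "\<And>s. s \<in> A \<Longrightarrow> - s \<in> A"
    and small: "\<And>s. s \<in> A \<Longrightarrow> \<bar>snd s\<bar> \<le> (1::int)"
    and sym: "\<And>i j. (i, j) \<in> A \<Longrightarrow> (i, - j) \<in> A"
    and a1nz: "Apoly A 1 \<noteq> 0"
begin

sublocale W: wset A by unfold_locales (use fin neg in auto)
sublocale Dd: dset A by unfold_locales (use fin small sym a1nz in auto)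

definition "Nb n = n * nat (bnd A)"
definition "Spol = Abs_fps (\<lambda>n. \<Sum>i\<le>Nb n. monom (real (Sn A (int i) n)) i)"
definition "Ppol = Abs_fps (\<lambda>n. \<Sum>i\<le>Nb n. monom (real (Pn A (int i) n)) i)"

lemma Nb_int: "int (Nb n) = int n * bnd A"
  using bnd_nonneg[OF fin] by (simp add: Nb_def)

lemma Nb_mono: "a \<le> n \<Longrightarrow> Nb a \<le> Nb n"
  by (simp add: Nb_def)

lemma coeff_Spol: "coeff (Spol $ n) i = real (Sn A (int i) n)"
proof -
  have "i > Nb n \<Longrightarrow> Sn A (int i) n = 0"
    using Sn_bound[OF fin, of "int i" n] Nb_int[of n] by (cases "Sn A (int i) n = 0") auto
  then show ?thesis by (auto simp: Spol_def coeff_sum_monom')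
qed

lemma coeff_Ppol: "coeff (Ppol $ n) i = real (Pn A (int i) n)"
proof -
  have "i > Nb n \<Longrightarrow> Pn A (int i) n = 0"
    using Pn_bound[OF fin, of "int i" n] Nb_int[of n] by (cases "Pn A (int i) n = 0") auto
  then show ?thesis by (auto simp: Ppol_def coeff_sum_monom')
qed

lemma degree_Spol: "degree (Spol $ n) \<le> Nb n"
  unfolding Spol_def by (simp, intro degree_sum_le) (auto intro: order.trans[OF degree_monom_le])

lemma degree_Ppol: "degree (Ppol $ n) \<le> Nb n"
  unfolding Ppol_def by (simp, intro degree_sum_le) (auto intro: order.trans[OF degree_monom_le])

lemma Ppol_x_nth: "poly_x (Ppol $ m) $$ j = real (Pn A j m)"
  by (simp add: poly_x_nth coeff_Ppol Pn_neg)

lemma Ppol_xinv_nth: "poly_xinv (Ppol $ m) $$ j = real (Pn A (- j) m)"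
  by (simp add: poly_xinv_nth coeff_Ppol Pn_neg)

lemma W_eq1: "Dd.Phi 0 = fmap poly_xinv Spol * fmap poly_x Ppol"
proof (rule fps_ext, rule fls_eqI)
  fix n k
  have "Dd.Phi 0 $ n $$ k = real (Wn A k 0 n)"
    by (simp add: Dd.Phi_def Lx_nth[OF fin])
  also have "\<dots> = (\<Sum>i=0..Nb n. \<Sum>m=0..n. real (Sn A (int i) m) * real (Pn A (k + int i) (n - m)))"
    by (subst W.W_decomp[where M = "Nb n"]) (simp_all add: Nb_int)
  also have "\<dots> = (\<Sum>m=0..n. \<Sum>i=0..Nb n. real (Sn A (int i) m) * real (Pn A (k + int i) (n - m)))"
    by (rule sum.swap)
  also have "\<dots> = (\<Sum>m=0..n. (poly_xinv (Spol $ m) * poly_x (Ppol $ (n - m))) $$ k)"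
  proof (intro sum.cong refl)
    fix m assume m: "m \<in> {0..n}"
    have "(poly_xinv (Spol $ m) * poly_x (Ppol $ (n - m))) $$ k
        = (\<Sum>i\<le>degree (Spol $ m). coeff (Spol $ m) i * real (Pn A (k + int i) (n - m)))"
      by (simp add: poly_xinv_mult_nth Ppol_x_nth)
    also have "\<dots> = (\<Sum>i\<le>Nb n. coeff (Spol $ m) i * real (Pn A (k + int i) (n - m)))"
      using degree_Spol[of m] Nb_mono[of m n] m by (intro sum_degree_extend) auto
    finally show "(\<Sum>i=0..Nb n. real (Sn A (int i) m) * real (Pn A (k + int i) (n - m)))
        = (poly_xinv (Spol $ m) * poly_x (Ppol $ (n - m))) $$ k"
      by (simp add: coeff_Spol atLeast0AtMost)
  qed
  also have "\<dots> = (fmap poly_xinv Spol * fmap poly_x Ppol) $ n $$ k"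
    by (simp add: fps_mult_nth fls_nth_sum)
  finally show "Dd.Phi 0 $ n $$ k = (fmap poly_xinv Spol * fmap poly_x Ppol) $ n $$ k" .
qed

lemma W_eq2: "Dd.Phi 0 = fmap poly_x Spol * fmap poly_xinv Ppol"
proof (rule fps_ext, rule fls_eqI)
  fix n k
  have "Dd.Phi 0 $ n $$ k = real (Wn A (- k) 0 n)"
    by (simp add: Dd.Phi_def Lx_nth[OF fin] W.W_sym[of k])
  also have "\<dots> = (\<Sum>i=0..Nb n. \<Sum>m=0..n. real (Sn A (int i) m) * real (Pn A (- k + int i) (n - m)))"
    by (subst W.W_decomp[where M = "Nb n"]) (simp_all add: Nb_int)
  also have "\<dots> = (\<Sum>m=0..n. \<Sum>i=0..Nb n. real (Sn A (int i) m) * real (Pn A (- k + int i) (n - m)))"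
    by (rule sum.swap)
  also have "\<dots> = (\<Sum>m=0..n. (poly_x (Spol $ m) * poly_xinv (Ppol $ (n - m))) $$ k)"
  proof (intro sum.cong refl)
    fix m assume m: "m \<in> {0..n}"
    have "(poly_x (Spol $ m) * poly_xinv (Ppol $ (n - m))) $$ k
        = (\<Sum>i\<le>degree (Spol $ m). coeff (Spol $ m) i * real (Pn A (- k + int i) (n - m)))"
      by (simp add: poly_x_mult_nth Ppol_xinv_nth)
    also have "\<dots> = (\<Sum>i\<le>Nb n. coeff (Spol $ m) i * real (Pn A (- k + int i) (n - m)))"
      using degree_Spol[of m] Nb_mono[of m n] m by (intro sum_degree_extend) auto
    finally show "(\<Sum>i=0..Nb n. real (Sn A (int i) m) * real (Pn A (- k + int i) (n - m)))
        = (poly_x (Spol $ m) * poly_xinv (Ppol $ (n - m))) $$ k"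
      by (simp add: coeff_Spol atLeast0AtMost)
  qed
  also have "\<dots> = (fmap poly_x Spol * fmap poly_xinv Ppol) $ n $$ k"
    by (simp add: fps_mult_nth fls_nth_sum)
  finally show "Dd.Phi 0 $ n $$ k = (fmap poly_x Spol * fmap poly_xinv Ppol) $ n $$ k" .
qed

end




context mctx begin

lemma Spol_0: "Spol $ 0 = 1"
  by (simp add: Spol_def Nb_def Sn_0)

lemma Ppol_0: "Ppol $ 0 = 1"
  by (simp add: Ppol_def Nb_def Pn_def zero_prod_def)

definition "QQ = Spol * Ppol"
definition "DL = fmap (\<lambda>c. [:c:]) (Eg A) * pinv QQ"

lemma QQ_0: "QQ $ 0 = 1"
  by (simp add: QQ_def Spol_0 Ppol_0)

lemma ev0_Spol: "fmap (\<lambda>p. poly p 0) Spol = 1"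
proof -
  have "fmap (\<lambda>p. poly p 0) Spol = Sg A 0"
    by (rule fps_ext) (simp add: poly_0_coeff_0 coeff_Spol Sg_def)
  then show ?thesis by (simp add: Sg_0)
qed

lemma ev0_Ppol: "fmap (\<lambda>p. poly p 0) Ppol = Eg A"
  by (rule fps_ext) (simp add: poly_0_coeff_0 coeff_Ppol Eg_def Pg_def)

lemma ev0_DL: "fmap (\<lambda>p. poly p 0) DL = 1"
proof -
  interpret h: rhom "\<lambda>p::real poly. poly p 0" by (rule rhom_ev0)
  have "fmap (\<lambda>p. poly p 0) DL = fmap (\<lambda>p. poly p 0) (fmap (\<lambda>c. [:c:]) (Eg A)) * fmap (\<lambda>p. poly p 0) (pinv QQ)"
    by (simp add: DL_def h.fmap_mult)
  also have "fmap (\<lambda>p. poly p 0) (fmap (\<lambda>c. [:c:]) (Eg A)) = Eg A"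
    by (rule fps_ext) simp
  also have "fmap (\<lambda>p. poly p 0) (pinv QQ) = pinv (fmap (\<lambda>p. poly p 0) QQ)"
    by (rule h.fmap_pinv[OF QQ_0])
  also have "fmap (\<lambda>p. poly p 0) QQ = Eg A"
    by (simp add: QQ_def h.fmap_mult ev0_Spol ev0_Ppol)
  also have "Eg A * pinv (Eg A) = 1" by (rule pinv) (simp add: Eg_0)
  finally show ?thesis .
qed

lemma Eg2_0: "(Eg A)\<^sup>2 $ 0 = 1"
  by (simp add: power2_eq_square Eg_0)

lemma DL_0: "DL $ 0 = 1"
  by (simp add: DL_def Eg_0 pinv_0)

lemma delta_factor:
  "delta A = fmap fls_const (inverse ((Eg A)\<^sup>2)) * fmap poly_x DL * fmap poly_xinv DL"
proof -
  interpret hx: rhom poly_x by (rule rhom_poly_x)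
  interpret hy: rhom poly_xinv by (rule rhom_poly_xinv)
  interpret hc: rhom "fls_const :: real \<Rightarrow> real fls" by (rule rhom_fls_const)
  define e where "e = fmap fls_const (Eg A)"
  define u where "u = fmap poly_x QQ"
  define v where "v = fmap poly_xinv QQ"
  have e0: "e $ 0 = 1" by (simp add: e_def Eg_0)
  have u0: "u $ 0 = 1" by (simp add: u_def QQ_0 hx.h1)
  have v0: "v $ 0 = 1" by (simp add: v_def QQ_0 hy.h1)
  have "fmap poly_x DL = e * inverse u"
    by (simp add: DL_def hx.fmap_mult hx.fmap_pinv QQ_0 fmap_fmap poly_x_const e_def
        flip: u_def, simp add: pinv_inverse u0)
  moreover have "fmap poly_xinv DL = e * inverse v"
    by (simp add: DL_def hy.fmap_mult hy.fmap_pinv QQ_0 fmap_fmap poly_xinv_const e_def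
        flip: v_def, simp add: pinv_inverse v0)
  moreover have "fmap fls_const (inverse ((Eg A)\<^sup>2)) = inverse (e\<^sup>2)"
  proof -
    have "inverse ((Eg A)\<^sup>2) = pinv ((Eg A)\<^sup>2)"
      by (rule pinv_inverse[symmetric]) (rule Eg2_0)
    then have "fmap fls_const (inverse ((Eg A)\<^sup>2)) = pinv (fmap fls_const ((Eg A)\<^sup>2))"
      by (simp add: hc.fmap_pinv[OF Eg2_0])
    also have "\<dots> = inverse (e\<^sup>2)"
      by (simp add: hc.fmap_power e_def pinv_inverse power2_eq_square Eg_0 hc.fmap_mult)
    finally show ?thesis .
  qed
  moreover have uv: "delta A * (u * v) = 1"
  proof -
    have "u * v = Dd.Phi 0 * Dd.Phi 0"
      by (subst (1) W_eq1, subst W_eq2)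
         (simp add: u_def v_def QQ_def hx.fmap_mult hy.fmap_mult mult_ac)
    then show ?thesis using Dd.delta_W by (simp add: power2_eq_square)
  qed
  moreover have "delta A = inverse u * inverse v"
  proof -
    have "delta A = pinv (u * v)"
      by (rule pinv_eq[symmetric]) (simp_all add: u0 v0 uv mult.commute)
    also have "\<dots> = inverse (u * v)" by (rule pinv_inverse) (simp add: u0 v0)
    also have "\<dots> = inverse u * inverse v" by (rule fps_inverse_mult)
    finally show ?thesis .
  qed
  moreover have ie: "inverse e * e = 1" by (rule inverse_mult_eq_1) (simp add: e0)
  moreover have r: "inverse (e\<^sup>2) * (e * inverse u) * (e * inverse v)
      = (inverse e * e) * (inverse e * e) * (inverse u * inverse v)"
    by (simp only: fps_inverse_power, simp only: power2_eq_square mult_ac)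
  ultimately show ?thesis
    by (simp only: ie mult_1_left)
qed

lemma cf_exists: "canonical_factorization A (inverse ((Eg A)\<^sup>2)) DL DL"
proof -
  have "poly (DL $ n) 0 = (if n = 0 then 1 else 0)" for n
    using arg_cong[OF ev0_DL, of "\<lambda>f. f $ n"] by (simp add: fps_one_nth)
  then show ?thesis
    unfolding cf_unfold using delta_factor DL_0 by (simp add: Eg_0 Eg2_0)
qed

lemma Dconst_eq: "Dconst A = inverse ((Eg A)\<^sup>2)"
  unfolding Dconst_def
proof (rule the_equality)
  show "\<exists>Dl Dlb. canonical_factorization A (inverse ((Eg A)\<^sup>2)) Dl Dlb"
    using cf_exists by blast
next
  fix D assume "\<exists>Dl Dlb. canonical_factorization A D Dl Dlb"
  then obtain Dl Dlb where "canonical_factorization A D Dl Dlb" by blast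
  then show "D = inverse ((Eg A)\<^sup>2)" using cf_unique cf_exists by blast
qed

lemma sqrt_eq: "fps_sqrt1 (inverse ((Eg A)\<^sup>2)) = inverse (Eg A)"
  unfolding fps_sqrt1_def
proof (rule the_equality)
  show "inverse (Eg A) $ 0 = 1 \<and> (inverse (Eg A))\<^sup>2 = inverse ((Eg A)\<^sup>2)"
    by (simp add: Eg_0 fps_inverse_power)
next
  fix s assume s: "s $ 0 = 1 \<and> s\<^sup>2 = inverse ((Eg A)\<^sup>2)"
  define t where "t = inverse (Eg A)"
  have t2: "t\<^sup>2 = inverse ((Eg A)\<^sup>2)" by (simp add: t_def fps_inverse_power)
  have "(s - t) * (s + t) = 0" using s t2 by (simp add: algebra_simps power2_eq_square)
  moreover have "s + t \<noteq> 0"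
  proof
    assume "s + t = 0"
    then have "(s + t) $ 0 = 0" by simp
    then show False using s by (simp add: t_def Eg_0)
  qed
  ultimately show "s = inverse (Eg A)" by (simp add: t_def)
qed

end

theorem mainTheorem15:
  fixes A :: "(int \<times> int) set"
  assumes fin: "finite A"
    and sym: "\<And>i j. (i, j) \<in> A \<Longrightarrow> (i, - j) \<in> A"
    and small: "\<And>i j. (i, j) \<in> A \<Longrightarrow> \<bar>j\<bar> \<le> 1"
    and A1_nonzero: "Apoly A 1 \<noteq> 0"
    and rev: "\<And>i j. (i, j) \<in> A \<Longrightarrow> (- i, - j) \<in> A"
  shows "(Abs_fps (\<lambda>k. if k > 0 then Lgf A (int k) else 0) :: real fps fps)
         = fps_X * inverse (1 - fps_X)
           * fps_const (inverse (fps_sqrt1 (Dconst A)))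
           * Abs_fps (\<lambda>k. (Sgf A (int k))\<^sup>2)"
proof -
  interpret mctx A
  proof
    show "finite A" by (rule fin)
    show "\<And>s. s \<in> A \<Longrightarrow> - s \<in> A" using rev by (auto simp: uminus_prod_def)
    show "\<And>s. s \<in> A \<Longrightarrow> \<bar>snd s\<bar> \<le> 1" using small by (metis prod.collapse)
    show "\<And>i j. (i, j) \<in> A \<Longrightarrow> (i, - j) \<in> A" by (rule sym)
    show "Apoly A 1 \<noteq> 0" by (rule A1_nonzero)
  qed
  have invE: "inverse (fps_sqrt1 (Dconst A)) = Eg A"
    by (simp add: Dconst_eq sqrt_eq Eg_0)
  show ?thesis
  proof (rule fps_ext)
    fix k
    show "Abs_fps (\<lambda>k. if k > 0 then Lgf A (int k) else 0) $ k
        = (fps_X * inverse (1 - fps_X) * fps_const (inverse (fps_sqrt1 (Dconst A)))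
           * Abs_fps (\<lambda>k. (Sgf A (int k))\<^sup>2)) $ k"
    proof (cases "k = 0")
      case True
      then show ?thesis by simp
    next
      case False
      have "(fps_X * inverse (1 - fps_X) * fps_const (inverse (fps_sqrt1 (Dconst A)))
           * Abs_fps (\<lambda>k. (Sgf A (int k))\<^sup>2)) $ k = Eg A * (\<Sum>j<k. (Sgf A (int j))\<^sup>2)"
        unfolding invE final_coeff using False by simp
      also have "\<dots> = Eg A * (\<Sum>j<k. (Sg A (int j))\<^sup>2)" by (simp add: Sgf_eq[OF fin])
      also have "\<dots> = Lg A (int k)" using False by (simp add: W.Lg_sum)
      also have "\<dots> = Lgf A (int k)" using False by (simp add: Lgf_eq[OF fin])
      finally show ?thesis using False by simp
    qed
  qed
qed


end
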